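(* Let $q$ be odd, $\alpha,\beta\in\mathbb{F}_{q^2}$ with $\alpha\ne0$ and $(\beta^q-\beta)^2+4\alpha^{q+1}$ a nonsquare in $\mathbb{F}_q$, let $w=\epsilon^2$, $R_2=(0,w\epsilon,1)$ and $U_\infty=(1,0,0)$. (1) If $\alpha$ is a nonsquare in $\mathbb{F}_{q^2}$, then $\mathrm{pedal}(R_2)$ is an arc. (2) If $\alpha$ is a nonzero square in $\mathbb{F}_{q^2}$, then $\mathrm{pedal}(R_2)$ is a set of class $(0,1,2,4)$. Further, there exist at least $\frac{q-3}{4}$ lines meeting $\mathrm{pedal}(R_2)$ in exactly $4$ points, and every such line passes through $U_\infty$.
   Context: Points of $\mathrm{PG}(2,q^2)$ have homogeneous coordinates $(x,y,z)$. $\zeta$ is a primitive element of $\mathbb{F}_{q^2}$ and $\epsilon=\zeta^{(q+1)/2}$. $\mathcal U_{\alpha\beta}=\{(x,\alpha x^2+\beta x^{q+1}+r,1): x\in\mathbb{F}_{q^2}, r\in\mathbb{F}_q\}\cup\{(0,1,0)\}$, which under the hypotheses is a unital (a set of $q^3+1$ points meeting every line in $1$ or $q+1$ points), and $R_2\notin\mathcal U_{\alpha\beta}$. For a point $P$ not on the unital, $\mathrm{pedal}(P)$ is the set of points of contact of the $q+1$ tangent lines through $P$. A set is of class $(a_1,\dots,a_k)$ if every line meets it in some $a_i$ points and each $a_i$ occurs for some line. An arc is a set meeting every line in at most $2$ points. *)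

theory Defs
  imports Complex_Main
begin

(* Homogeneous coordinates: nonzero triples over a field 'a. *)
type_synonym 'a vec3 = "'a \<times> 'a \<times> 'a"

definition pt :: "'a::field vec3 \<Rightarrow> 'a vec3 set" where
  "pt v = {(c * fst v, c * fst (snd v), c * snd (snd v)) | c. c \<noteq> 0}"

definition PG2 :: "'a::field vec3 set set" where
  "PG2 = {pt v | v. v \<noteq> (0, 0, 0)}"

definition dot3 :: "'a::field vec3 \<Rightarrow> 'a vec3 \<Rightarrow> 'a" where
  "dot3 l v = fst l * fst v + fst (snd l) * fst (snd v) + snd (snd l) * snd (snd v)"

definition line :: "'a::field vec3 \<Rightarrow> 'a vec3 set set" where
  "line l = {pt v | v. v \<noteq> (0, 0, 0) \<and> dot3 l v = 0}"

definition lines :: "'a::field vec3 set set set" where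
  "lines = {line l | l. l \<noteq> (0, 0, 0)}"

definition subfield_q :: "nat \<Rightarrow> 'a::field set" where
  "subfield_q q = {r. r ^ q = r}"

definition unital_ab :: "nat \<Rightarrow> 'a::field \<Rightarrow> 'a \<Rightarrow> 'a vec3 set set" where
  "unital_ab q \<alpha> \<beta> =
     {pt (x, \<alpha> * x ^ 2 + \<beta> * x ^ (q + 1) + r, 1) | x r. r \<in> subfield_q q}
     \<union> {pt (0, 1, 0)}"

definition pedal :: "'a::field vec3 set set \<Rightarrow> 'a vec3 set \<Rightarrow> 'a vec3 set set" where
  "pedal U P = {Q. \<exists>l \<in> lines. P \<in> l \<and> l \<inter> U = {Q}}"

definition is_arc :: "'a::field vec3 set set \<Rightarrow> bool" where
  "is_arc S \<longleftrightarrow> (\<forall>l \<in> lines. card (l \<inter> S) \<le> 2)"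

definition of_class :: "'a::field vec3 set set \<Rightarrow> nat set \<Rightarrow> bool" where
  "of_class S A \<longleftrightarrow> (\<lambda>l. card (l \<inter> S)) ` lines = A"

definition primitive_elem :: "'a::field \<Rightarrow> bool" where
  "primitive_elem z \<longleftrightarrow> (\<forall>x. x \<noteq> 0 \<longrightarrow> (\<exists>k::nat. x = z ^ k))"

end

theory Submission
  imports Defs "HOL-Number_Theory.Residues" "HOL-Algebra.Sylow" "HOL-Computational_Algebra.Primes"
begin

lemma field_pow_card_minus1:
  fixes x :: "'a::{field,finite}"
  assumes "x \<noteq> 0"
  shows "x ^ (card (UNIV::'a set) - 1) = 1"
proof -
  have c: "card (UNIV - {0::'a}) = card (UNIV::'a set) - 1"
    by (simp add: card_Diff_singleton)
  have "(\<Prod>y\<in>UNIV-{0}. x * y) = x ^ card (UNIV - {0::'a}) * \<Prod>(UNIV-{0::'a})"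
    by (simp add: prod.distrib)
  moreover have "(\<Prod>y\<in>UNIV-{0}. x * y) = (\<Prod>y\<in>UNIV-{0::'a}. y)"
    by (rule prod.reindex_bij_witness[of _ "\<lambda>y. y / x" "\<lambda>y. x * y"]) (use assms in auto)
  moreover have "\<Prod>(UNIV-{0::'a}) \<noteq> 0" by simp
  ultimately show ?thesis using c by simp
qed

lemma pow_eq_prime_power:
  fixes n p :: nat
  assumes "n > 0" "\<And>r. prime r \<Longrightarrow> r dvd n \<Longrightarrow> r = p"
  shows "\<exists>e. n = p ^ e"
  using assms
proof (induction n rule: less_induct)
  case (less n)
  show ?case
  proof (cases "n = 1")
    case True then show ?thesis by (intro exI[of _ 0]) simp
  next
    case False
    then obtain r where r: "prime r" "r dvd n" using prime_factor_nat by blast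
    then have rp: "r = p" using less.prems by blast
    then obtain m where m: "n = p * m" using r by blast
    have "m > 0" using less.prems m by auto
    have "p > 1" using r rp prime_gt_1_nat by blast
    then have "m < n" using m \<open>m > 0\<close> by simp
    moreover have "r = p" if "prime r" "r dvd m" for r
      using less.prems(2)[OF that(1)] that(2) m by (simp add: dvd_mult)
    ultimately obtain e where "m = p ^ e" using less.IH \<open>m > 0\<close> by blast
    then show ?thesis using m by (intro exI[of _ "Suc e"]) simp
  qed
qed

lemma card_prime_factor_char:
  fixes r :: nat
  assumes fin: "card (UNIV::'a::{field,finite} set) = N" and r: "prime r" "r dvd N"
  shows "r = CHAR('a)"
proof -
  define G where "G = \<lparr> carrier = (UNIV :: 'a set), monoid.mult = (+), one = (0 :: 'a) \<rparr>"
  interpret group G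
  proof (rule groupI)
    fix x assume x: "x \<in> carrier G"
    show "\<exists>y\<in>carrier G. y \<otimes>\<^bsub>G\<^esub> x = \<one>\<^bsub>G\<^esub>"
      by (intro bexI[of _ "-x"]) (auto simp: G_def)
  qed (auto simp: G_def add_ac)
  have ordG: "order G = r ^ 1 * (N div r)" using r fin by (simp add: order_def G_def)
  obtain H where H: "subgroup H G" "card H = r ^ 1"
    using sylow_thm[OF r(1) is_group ordG] by (auto simp: G_def)
  have "card H \<ge> 2" using H r prime_ge_2_nat by simp
  have "\<not> H \<subseteq> {0}"
  proof
    assume "H \<subseteq> {0}"
    then have "card H \<le> card {0::'a}" by (intro card_mono) auto
    then show False using \<open>card H \<ge> 2\<close> by simp
  qed
  then obtain h where h: "h \<in> H" "h \<noteq> 0" by blast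
  interpret HG: group "G\<lparr>carrier := H\<rparr>" using subgroup.subgroup_is_group[OF H(1) is_group] .
  have pw: "x [^]\<^bsub>G\<lparr>carrier := H\<rparr>\<^esub> n = of_nat n * x" for x n
    by (induction n) (simp_all add: G_def algebra_simps)
  have "h [^]\<^bsub>G\<lparr>carrier := H\<rparr>\<^esub> order (G\<lparr>carrier := H\<rparr>) = \<one>\<^bsub>G\<lparr>carrier := H\<rparr>\<^esub>"
    using HG.pow_order_eq_1 h by simp
  then have "of_nat r * h = 0" using pw H by (simp add: order_def G_def)
  then have "of_nat r = (0::'a)" using h by simp
  then have "CHAR('a) dvd r" using of_nat_eq_0_iff_char_dvd by blast
  moreover have "prime CHAR('a)"
    by (rule prime_CHAR_semidom) (simp add: finite_imp_CHAR_pos)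
  ultimately show ?thesis using r(1) by (metis primes_dvd_imp_eq)
qed


locale ff =
  fixes q :: nat and \<zeta> :: "'a::{field,finite}"
  assumes card: "card (UNIV :: 'a set) = q ^ 2"
    and oddq: "odd q"
    and prim: "primitive_elem \<zeta>"
begin

definition M :: nat where "M = q^2 - 1"
definition cj :: "'a \<Rightarrow> 'a" where "cj x = x ^ q"

lemma q_ge3: "q \<ge> 3"
proof -
  have "card (UNIV::'a set) \<ge> card {0::'a, 1}" by (rule card_mono) auto
  then have h: "q^2 \<ge> 2" using card by simp
  have "\<not> q \<le> 1"
  proof
    assume "q \<le> 1" then have "q = 0 \<or> q = 1" by auto
    then show False using h by auto
  qed
  then show ?thesis using oddq by presburger
qed

lemma M_eq: "M = (q - 1) * (q + 1)"
proof -
  obtain p where "q = Suc p" using q_ge3 by (cases q) auto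
  then have "q^2 - 1 = (q - 1) * (q + 1)" by (simp add: power2_eq_square)
  then show ?thesis by (simp add: M_def)
qed

lemma M_pos: "M > 0" using M_eq q_ge3 by simp

lemma M_even: "M = 2 * (M div 2)"
proof -
  have "even M" using oddq by (simp add: M_eq)
  then show ?thesis by simp
qed

lemma pow_M: "x \<noteq> 0 \<Longrightarrow> x ^ M = (1::'a)"
  using field_pow_card_minus1[of x] card by (simp add: M_def)

lemma pow_q2: "x ^ (q^2) = (x::'a)"
proof (cases "x = 0")
  case True then show ?thesis using q_ge3 by simp
next
  case False
  have "q^2 = Suc M" using M_pos by (simp add: M_def)
  then show ?thesis using pow_M[OF False] by simp
qed

lemma q_char_power: "\<exists>e. q = CHAR('a) ^ e"
proof (rule pow_eq_prime_power)
  show "q > 0" using q_ge3 by simp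
  fix r assume "prime r" "r dvd q"
  then have "r dvd q^2" by (simp add: power2_eq_square)
  then show "r = CHAR('a)" using card_prime_factor_char[OF card \<open>prime r\<close>] by simp
qed

lemma prime_char: "prime CHAR('a)"
  by (rule prime_CHAR_semidom) (simp add: finite_imp_CHAR_pos)

lemma frob_add: "(x + y) ^ q = x ^ q + (y::'a) ^ q"
proof -
  obtain e where "q = CHAR('a) ^ e" using q_char_power by blast
  then show ?thesis using freshmans_dream'[OF prime_char] by blast
qed

lemma cj_add[simp]: "cj (x + y) = cj x + cj y" by (simp add: cj_def frob_add)
lemma cj_mult[simp]: "cj (x * y) = cj x * cj y" by (simp add: cj_def power_mult_distrib)
lemma cj_uminus[simp]: "cj (- x) = - cj x" using oddq by (simp add: cj_def power_minus_odd)
lemma cj_diff[simp]: "cj (x - y) = cj x - cj y"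
  by (metis cj_add cj_uminus diff_conv_add_uminus)
lemma cj_0[simp]: "cj 0 = 0" using q_ge3 by (simp add: cj_def)
lemma cj_1[simp]: "cj 1 = 1" by (simp add: cj_def)
lemma cj_of_nat[simp]: "cj (of_nat n) = of_nat n"
  by (induction n) simp_all
lemma cj_numeral[simp]: "cj (numeral n) = numeral n"
  by (metis cj_of_nat of_nat_numeral)
lemma cj_power[simp]: "cj (x ^ n) = cj x ^ n" unfolding cj_def by (metis power_mult mult.commute)
lemma cj_inverse[simp]: "cj (inverse x) = inverse (cj x)" by (simp add: cj_def power_inverse)
lemma cj_divide[simp]: "cj (x / y) = cj x / cj y" by (simp add: cj_def power_divide)
lemma cj_cj[simp]: "cj (cj x) = x"
proof -
  have "cj (cj x) = x ^ (q * q)" by (simp add: cj_def power_mult)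
  also have "\<dots> = x" using pow_q2[of x] by (simp add: power2_eq_square)
  finally show ?thesis .
qed
lemma cj_eq0_iff[simp]: "cj x = 0 \<longleftrightarrow> x = 0" using q_ge3 by (simp add: cj_def)
lemma cj_inj: "cj x = cj y \<longleftrightarrow> x = y" by (metis cj_cj)

lemma two_ne0: "(2::'a) \<noteq> 0"
proof
  assume "(2::'a) = 0"
  then have "of_nat 2 = (0::'a)" by simp
  then have "CHAR('a) dvd 2" using of_nat_eq_0_iff_char_dvd by blast
  moreover have "CHAR('a) dvd q^2" using CHAR_dvd_CARD[where 'a='a] card by simp
  moreover have "prime CHAR('a)" by (rule prime_char)
  ultimately have "2 dvd q^2" by (metis primes_dvd_imp_eq two_is_prime_nat)
  then have "2 dvd q" by (simp add: prime_dvd_power_iff)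
  then show False using oddq by simp
qed

lemma zeta_ne0: "\<zeta> \<noteq> 0"
proof
  assume z: "\<zeta> = 0"
  have "\<not> (UNIV::'a set) \<subseteq> {0, 1}"
  proof
    assume "(UNIV::'a set) \<subseteq> {0, 1}"
    then have "card (UNIV::'a set) \<le> card {0::'a,1}" by (intro card_mono) auto
    also have "\<dots> \<le> 2" by (simp add: card_insert_le_m1)
    finally have "q^2 \<le> 2" using card by simp
    moreover have "q^2 \<ge> 3^2" using q_ge3 by (intro power_mono) auto
    ultimately show False by simp
  qed
  then obtain x :: 'a where x: "x \<noteq> 0" "x \<noteq> 1" by blast
  then obtain k where "x = \<zeta> ^ k" using prim unfolding primitive_elem_def by blast
  then show False using x z by (cases k) auto
qed

lemma zeta_M: "\<zeta> ^ M = 1" using pow_M zeta_ne0 .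

lemma zeta_pow_mod: "\<zeta> ^ k = \<zeta> ^ (k mod M)"
proof -
  have "\<zeta> ^ k = \<zeta> ^ (M * (k div M) + k mod M)" by simp
  also have "\<dots> = (\<zeta> ^ M) ^ (k div M) * \<zeta> ^ (k mod M)" by (simp only: power_add power_mult)
  finally show ?thesis by (simp add: zeta_M)
qed

lemma zeta_order: "\<zeta> ^ k = 1 \<longleftrightarrow> M dvd k"
proof
  assume h: "\<zeta> ^ k = 1"
  define r where "r = k mod M"
  have r1: "\<zeta> ^ r = 1" using h zeta_pow_mod r_def by simp
  have "r < M" using M_pos r_def by simp
  show "M dvd k"
  proof (rule ccontr)
    assume "\<not> M dvd k"
    then have "r > 0" using r_def by (simp add: dvd_eq_mod_eq_0)
    have pr: "\<zeta> ^ j = \<zeta> ^ (j mod r)" for j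
    proof -
      have "\<zeta> ^ j = \<zeta> ^ (r * (j div r) + j mod r)" by simp
      also have "\<dots> = (\<zeta> ^ r) ^ (j div r) * \<zeta> ^ (j mod r)" by (simp only: power_add power_mult)
      finally show ?thesis by (simp add: r1)
    qed
    have "UNIV - {0} \<subseteq> (\<lambda>j. \<zeta> ^ j) ` {..<r}"
    proof
      fix x assume "x \<in> UNIV - {0::'a}"
      then obtain j where "x = \<zeta> ^ j" using prim unfolding primitive_elem_def by auto
      then have "x = \<zeta> ^ (j mod r)" using pr by simp
      moreover have "j mod r \<in> {..<r}" using \<open>r > 0\<close> by simp
      ultimately show "x \<in> (\<lambda>j. \<zeta> ^ j) ` {..<r}" by blast
    qed
    then have "card (UNIV - {0::'a}) \<le> card ((\<lambda>j. \<zeta> ^ j) ` {..<r})"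
      by (intro card_mono) auto
    also have "\<dots> \<le> r" using card_image_le[of "{..<r}" "\<lambda>j. \<zeta> ^ j"] by simp
    finally have "M \<le> r" using card by (simp add: card_Diff_singleton M_def)
    then show False using \<open>r < M\<close> by simp
  qed
next
  assume "M dvd k" then show "\<zeta> ^ k = 1" by (auto simp: power_mult zeta_M)
qed

lemma zeta_inj: "i < M \<Longrightarrow> j < M \<Longrightarrow> \<zeta> ^ i = \<zeta> ^ j \<Longrightarrow> i = j"
proof (induction i j rule: linorder_wlog)
  case (le i j)
  have "\<zeta> ^ i * \<zeta> ^ (j - i) = \<zeta> ^ (i + (j - i))" by (simp only: power_add)
  also have "i + (j - i) = j" using le by simp
  finally have "\<zeta> ^ j = \<zeta> ^ i * \<zeta> ^ (j - i)" by simp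
  then have "\<zeta> ^ (j - i) = 1" using le zeta_ne0 by simp
  then have "M dvd (j - i)" using zeta_order by blast
  then have "j - i = 0"
    using le by (metis dvd_imp_le less_imp_diff_less not_le neq0_conv)
  then show ?case using le by simp
qed (simp add: eq_commute)

lemma zeta_half: "\<zeta> ^ (M div 2) = -1"
proof -
  have "(\<zeta> ^ (M div 2))^2 = 1" using M_even zeta_M by (metis power_mult mult.commute)
  then have "(\<zeta> ^ (M div 2) - 1) * (\<zeta> ^ (M div 2) + 1) = 0" by (simp add: algebra_simps power2_eq_square)
  moreover have "\<zeta> ^ (M div 2) \<noteq> 1"
  proof
    assume "\<zeta> ^ (M div 2) = 1"
    then have "M dvd M div 2" using zeta_order by blast
    moreover have "0 < M div 2" "M div 2 < M" using M_pos M_even by linarith+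
    ultimately show False by (meson dvd_imp_le not_le)
  qed
  ultimately show ?thesis by (metis eq_neg_iff_add_eq_0 right_minus_eq mult_eq_0_iff) 
qed

lemma sq_crit: fixes x :: 'a assumes "x \<noteq> 0" "x ^ (M div 2) = 1" shows "\<exists>y. y^2 = x"
proof -
  obtain k where k: "x = \<zeta> ^ k" using prim assms unfolding primitive_elem_def by blast
  then have "\<zeta> ^ (k * (M div 2)) = 1" using assms by (simp add: power_mult)
  then have "2 * (M div 2) dvd k * (M div 2)" using zeta_order M_even by metis
  moreover have "M div 2 > 0" using M_pos M_even by linarith
  ultimately have "2 dvd k" by simp
  then obtain j where "k = 2 * j" by blast
  then show ?thesis using k by (intro exI[of _ "\<zeta> ^ j"]) (simp add: power_mult[symmetric] mult.commute)
qed

lemma sq_crit_conv: fixes x :: 'a assumes "y ^ 2 = x" "x \<noteq> 0" shows "x ^ (M div 2) = 1"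
proof -
  have "y \<noteq> 0" using assms by auto
  have "x ^ (M div 2) = y ^ (2 * (M div 2))" using assms by (simp add: power_mult)
  also have "\<dots> = 1" using M_even pow_M[OF \<open>y \<noteq> 0\<close>] by simp
  finally show ?thesis .
qed

definition Fq :: "'a set" where "Fq = subfield_q q"

lemma Fq_iff: "x \<in> Fq \<longleftrightarrow> cj x = x" by (simp add: Fq_def subfield_q_def cj_def)

lemma Fq_pow1: fixes x :: 'a shows "cj x = x \<Longrightarrow> x \<noteq> 0 \<Longrightarrow> x ^ (q - 1) = 1"
proof -
  assume "cj x = x" "x \<noteq> 0"
  then have "x * x ^ (q - 1) = x * 1" using q_ge3 by (simp add: cj_def power_Suc[symmetric])
  then show ?thesis using \<open>x \<noteq> 0\<close> by (metis mult_left_cancel)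
qed

lemma qm1_eq: "q - 1 = 2 * ((q - 1) div 2)" using oddq q_ge3 by presburger

lemma Fq_nonsq:
  fixes x :: 'a
  assumes "cj x = x" "x \<noteq> 0" "\<not> (\<exists>y. cj y = y \<and> y^2 = x)"
  shows "x ^ ((q - 1) div 2) = -1"
proof -
  let ?h = "(q - 1) div 2"
  have "(x ^ ?h)^2 = 1" using Fq_pow1[OF assms(1,2)] qm1_eq by (metis power_mult mult.commute)
  then have "(x ^ ?h - 1) * (x ^ ?h + 1) = 0" by (simp add: algebra_simps power2_eq_square)
  moreover have "x ^ ?h \<noteq> 1"
  proof
    assume h1: "x ^ ?h = 1"
    obtain k where k: "x = \<zeta> ^ k" using prim assms unfolding primitive_elem_def by blast
    then have "\<zeta> ^ (k * ?h) = 1" using h1 by (simp add: power_mult)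
    then have "M dvd k * ?h" using zeta_order by blast
    moreover have "M = (2 * (q + 1)) * ?h" using M_eq qm1_eq by (metis mult.commute mult.left_commute)
    moreover have "?h > 0" using q_ge3 by simp
    ultimately have "(2 * (q + 1)) * ?h dvd k * ?h" by simp
    then have "2 * (q + 1) dvd k" using \<open>?h > 0\<close> dvd_times_right_cancel_iff by blast
    then obtain j where j: "k = 2 * ((q + 1) * j)" by (metis dvd_def mult.assoc)
    define y where "y = \<zeta> ^ ((q + 1) * j)"
    have "y ^ 2 = x" using k j by (simp add: y_def power_mult[symmetric] mult.commute)
    moreover have "cj y = y"
    proof -
      have e: "(q + 1) * j * (q - 1) = M * j" unfolding M_eq by (simp only: mult_ac)
      have "y ^ (q - 1) = \<zeta> ^ ((q + 1) * j * (q - 1))" unfolding y_def by (simp only: power_mult)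
      also have "\<dots> = \<zeta> ^ (M * j)" by (simp only: e)
      also have "\<dots> = 1" by (simp add: power_mult zeta_M)
      finally have "y ^ (q - 1) = 1" .
      moreover have "q = Suc (q - 1)" using q_ge3 by simp
      ultimately have "y ^ q = y" by (metis mult.right_neutral power_Suc)
      then show ?thesis by (simp add: cj_def)
    qed
    ultimately show False using assms(3) by blast
  qed
  ultimately show ?thesis by (metis eq_neg_iff_add_eq_0 right_minus_eq mult_eq_0_iff)
qed

end

context ff
begin

lemma pow_q_split: "x ^ q = x * x ^ (q - 1)"
  using q_ge3 by (cases q) auto

lemma Fq_star: "Fq - {0} = (\<lambda>j. \<zeta> ^ ((q + 1) * j)) ` {..<q - 1}"
proof
  show "(\<lambda>j. \<zeta> ^ ((q + 1) * j)) ` {..<q - 1} \<subseteq> Fq - {0}"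
  proof
    fix x assume "x \<in> (\<lambda>j. \<zeta> ^ ((q + 1) * j)) ` {..<q - 1}"
    then obtain j where x: "x = \<zeta> ^ ((q + 1) * j)" by blast
    have e: "(q + 1) * j * (q - 1) = M * j" unfolding M_eq by (simp only: mult_ac)
    have "x ^ (q - 1) = \<zeta> ^ ((q + 1) * j * (q - 1))" unfolding x by (simp only: power_mult)
    also have "\<dots> = \<zeta> ^ (M * j)" by (simp only: e)
    also have "\<dots> = 1" by (simp add: power_mult zeta_M)
    finally have "x ^ (q - 1) = 1" .
    then have "x ^ q = x" by (simp add: pow_q_split)
    moreover have "x \<noteq> 0" using x zeta_ne0 by simp
    ultimately show "x \<in> Fq - {0}" by (simp add: Fq_iff cj_def)
  qed
next
  show "Fq - {0} \<subseteq> (\<lambda>j. \<zeta> ^ ((q + 1) * j)) ` {..<q - 1}"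
  proof
    fix x assume x: "x \<in> Fq - {0}"
    then obtain k where k: "x = \<zeta> ^ k" using prim unfolding primitive_elem_def by blast
    have "x ^ (q - 1) = 1" using x Fq_pow1 Fq_iff by blast
    then have "\<zeta> ^ (k * (q - 1)) = 1" using k by (simp add: power_mult)
    then have "(q + 1) * (q - 1) dvd k * (q - 1)" using zeta_order M_eq by (simp add: mult.commute)
    then have "q + 1 dvd k" using q_ge3 dvd_times_right_cancel_iff[of "q - 1" "q + 1" k] by simp
    then obtain j where j: "k = (q + 1) * j" by blast
    have "x = \<zeta> ^ (((q + 1) * j) mod M)" unfolding k j by (rule zeta_pow_mod)
    also have "((q + 1) * j) mod M = (q + 1) * (j mod (q - 1))"
      using M_eq by (simp only: mult.commute[of "q - 1"] mod_mult_mult1)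
    finally have "x = \<zeta> ^ ((q + 1) * (j mod (q - 1)))" .
    moreover have "j mod (q - 1) < q - 1" using q_ge3 by simp
    ultimately show "x \<in> (\<lambda>j. \<zeta> ^ ((q + 1) * j)) ` {..<q - 1}" by blast
  qed
qed

lemma card_Fq_star: "card (Fq - {0}) = q - 1"
proof -
  have "inj_on (\<lambda>j. \<zeta> ^ ((q + 1) * j)) {..<q - 1}"
  proof (rule inj_onI)
    fix i j assume ij: "i \<in> {..<q - 1}" "j \<in> {..<q - 1}" "\<zeta> ^ ((q + 1) * i) = \<zeta> ^ ((q + 1) * j)"
    have "(q + 1) * i < (q + 1) * (q - 1)" "(q + 1) * j < (q + 1) * (q - 1)"
      using ij(1,2) unfolding mult_less_cancel1 by simp_all
    then have "(q + 1) * i < M" "(q + 1) * j < M" using M_eq by (simp_all add: mult.commute)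
    then have "(q + 1) * i = (q + 1) * j" using zeta_inj ij(3) by blast
    then have "i = j \<or> q + 1 = 0" by (simp only: mult_cancel1)
    then show "i = j" by simp
  qed
  then show ?thesis using Fq_star by (simp add: card_image)
qed

lemma zero_Fq: "0 \<in> Fq" by (simp add: Fq_iff)

lemma card_Fq: "card Fq = q"
proof -
  have "card (insert 0 (Fq - {0})) = Suc (card (Fq - {0}))" by (rule card_insert_disjoint) auto
  moreover have "insert 0 (Fq - {0}) = Fq" using zero_Fq by auto
  ultimately have "card Fq = Suc (card (Fq - {0}))" by simp
  then show ?thesis using card_Fq_star q_ge3 by simp
qed

definition eps :: 'a where "eps = \<zeta> ^ ((q + 1) div 2)"

lemma eps_ne0: "eps \<noteq> 0" using zeta_ne0 by (simp add: eps_def)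

lemma cj_eps: "cj eps = - eps"
proof -
  obtain u where u: "q = 2 * u + 1" using oddq oddE by blast
  have e: "(q + 1) div 2 * (q - 1) = M div 2"
  proof -
    have h1: "(q + 1) div 2 = u + 1" using u by simp
    have h2: "q - 1 = 2 * u" using u by simp
    have h3: "q + 1 = 2 * (u + 1)" using u by simp
    have "M = 2 * ((u + 1) * (2 * u))" unfolding M_eq h2 h3 by (simp only: mult_ac)
    then have "M div 2 = (u + 1) * (2 * u)" by simp
    then show ?thesis by (simp only: h1 h2)
  qed
  have "eps ^ (q - 1) = \<zeta> ^ ((q + 1) div 2 * (q - 1))" unfolding eps_def by (simp only: power_mult)
  also have "\<dots> = -1" by (simp only: e zeta_half)
  finally have "eps ^ (q - 1) = -1" .
  then have "eps ^ q = eps * (-1)" using pow_q_split[of eps] by (simp only:)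
  then show ?thesis unfolding cj_def by simp
qed

lemma Fq_cj_neg_ne: assumes "cj x = - x" "cj x = x" shows "x = 0"
proof -
  have "x = - x" using assms by metis
  then have "x + x = 0" using eq_neg_iff_add_eq_0 by blast
  then have "2 * x = 0" by (simp only: mult_2)
  then show "x = 0" using two_ne0 by simp
qed

end

locale ffab = ff q \<zeta> for q :: nat and \<zeta> :: "'a::{field,finite}" +
  fixes \<alpha> \<beta> :: 'a
  assumes a0: "\<alpha> \<noteq> 0"
    and nsq: "\<not> (\<exists>y \<in> subfield_q q. y ^ 2 = (\<beta> ^ q - \<beta>) ^ 2 + 4 * \<alpha> ^ (q + 1))"
begin

definition \<delta> :: 'a where "\<delta> = \<beta> - cj \<beta>"
definition Nf :: "'a \<Rightarrow> 'a" where "Nf x = x * cj x"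
definition Dd :: 'a where "Dd = \<delta>^2 + 4 * Nf \<alpha>"
definition c :: 'a where "c = eps^2 * eps"
definition Qf :: "'a \<Rightarrow> 'a" where "Qf x = \<alpha> * x^2 - cj \<alpha> * (cj x)^2 + \<delta> * Nf x"
definition Bf :: "'a \<Rightarrow> 'a \<Rightarrow> 'a" where
  "Bf u x = 2 * \<alpha> * u * x - 2 * cj \<alpha> * cj u * cj x + \<delta> * (u * cj x + cj u * x)"
definition phi :: "'a \<Rightarrow> 'a" where "phi u = 2 * \<alpha> * u + \<delta> * cj u"

lemma cj_delta[simp]: "cj \<delta> = - \<delta>" by (simp add: \<delta>_def)
lemma cj_Nf[simp]: "cj (Nf x) = Nf x" by (simp add: Nf_def mult.commute)
lemma Nf_eq: "Nf x = x ^ (q + 1)" by (simp add: Nf_def cj_def)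
lemma Nf_ne0: "x \<noteq> 0 \<Longrightarrow> Nf x \<noteq> 0" by (simp add: Nf_def)
lemma Nf_mult: "Nf (x * y) = Nf x * Nf y" by (simp add: Nf_def mult_ac)
lemma cj_c[simp]: "cj c = - c" by (simp add: c_def cj_eps)
lemma c_ne0: "c \<noteq> 0" by (simp add: c_def eps_ne0)
lemma cj_Dd[simp]: "cj Dd = Dd" by (simp add: Dd_def)
lemma Dd_eq: "(\<beta> ^ q - \<beta>) ^ 2 + 4 * \<alpha> ^ (q + 1) = Dd"
  by (simp add: Dd_def \<delta>_def Nf_eq flip: cj_def) (simp add: power2_eq_square algebra_simps)

lemma Dd_nonsq: "\<not> (\<exists>y. cj y = y \<and> y^2 = Dd)"
  using nsq Dd_eq by (auto simp: Fq_iff[symmetric] Fq_def)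

lemma Dd_ne0: "Dd \<noteq> 0"
  using Dd_nonsq by (metis cj_0 power_zero_numeral)

lemma Dd_pow: "Dd ^ ((q - 1) div 2) = -1"
  using Fq_nonsq[OF cj_Dd Dd_ne0 Dd_nonsq] .

lemma cj_Qf: "cj (Qf x) = - Qf x"
  by (simp add: Qf_def algebra_simps)

lemma Qf_aniso: assumes "Qf x = 0" shows "x = 0"
proof (rule ccontr)
  assume x: "x \<noteq> 0"
  define a where "a = \<alpha> * x^2"
  define n where "n = Nf x"
  have n0: "n \<noteq> 0" using x by (simp add: n_def Nf_ne0)
  have h1: "a - cj a = - \<delta> * n" using assms by (simp add: Qf_def a_def n_def algebra_simps)
  have h2: "a * cj a = Nf \<alpha> * n^2" by (simp add: a_def n_def Nf_def power2_eq_square mult_ac)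
  have s1: "(a - cj a)^2 = \<delta>^2 * n^2" by (simp only: h1) (simp add: power2_eq_square)
  have "(a + cj a)^2 = (a - cj a)^2 + 4 * (a * cj a)" by (simp add: power2_eq_square algebra_simps)
  also have "\<dots> = \<delta>^2 * n^2 + 4 * (Nf \<alpha> * n^2)" by (simp only: s1 h2)
  also have "\<dots> = Dd * n^2" by (simp add: Dd_def algebra_simps)
  finally have e: "(a + cj a)^2 = Dd * n^2" .
  define y where "y = (a + cj a) / n"
  have "y^2 = Dd" using e n0 by (simp add: y_def power_divide)
  moreover have "cj y = y" by (simp add: y_def n_def add.commute)
  ultimately show False using Dd_nonsq by blast
qed

lemma Qf_ne0: "x \<noteq> 0 \<Longrightarrow> Qf x \<noteq> 0" using Qf_aniso by blast

lemma Qf_0[simp]: "Qf 0 = 0" by (simp add: Qf_def Nf_def)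

lemma Qf_sub: "Qf (x - u) = Qf x - Bf u x + Qf u"
  by (simp add: Qf_def Bf_def Nf_def power2_eq_square algebra_simps)

lemma Qf_add: "Qf (u + x) = Qf u + Bf u x + Qf x"
  by (simp add: Qf_def Bf_def Nf_def power2_eq_square algebra_simps)

lemma Qf_uminus[simp]: "Qf (- x) = Qf x"
  by (simp add: Qf_def Nf_def power2_eq_square algebra_simps)

lemma Bf_self: "Bf u u = 2 * Qf u"
  by (simp add: Qf_def Bf_def Nf_def power2_eq_square algebra_simps)

lemma Qf_scale: "cj l = l \<Longrightarrow> Qf (l * x) = l^2 * Qf x"
  by (simp add: Qf_def Nf_def power2_eq_square algebra_simps)

lemma Bf_scale: "cj l = l \<Longrightarrow> Bf u (l * x) = l * Bf u x"
  by (simp add: Bf_def power2_eq_square algebra_simps)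

lemma phi_T: "phi u * x - cj (phi u * x) = Bf u x"
  by (simp add: phi_def Bf_def algebra_simps)

lemma phi_diff: "phi (u - v) = phi u - phi v"
  by (simp add: phi_def algebra_simps)

lemma phi_zero: assumes "phi u = 0" shows "u = 0"
proof (rule ccontr)
  assume u: "u \<noteq> 0"
  have e1: "2 * \<alpha> * u = - \<delta> * cj u" using assms by (simp add: phi_def eq_neg_iff_add_eq_0)
  have e2: "2 * cj \<alpha> * cj u = \<delta> * u" using arg_cong[OF e1, of cj] by simp
  have "(2 * \<alpha> * u) * (2 * cj \<alpha> * cj u) = (- \<delta> * cj u) * (\<delta> * u)" using e1 e2 by simp
  then have "Dd * Nf u = 0" by (simp add: Dd_def Nf_def power2_eq_square algebra_simps)
  then show False using Dd_ne0 Nf_ne0[OF u] by simp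
qed

lemma phi_surj: "\<exists>u. phi u = m"
proof -
  have "inj phi"
  proof (rule injI)
    fix u v assume "phi u = phi v"
    then have "phi (u - v) = 0" by (simp add: phi_diff)
    then show "u = v" using phi_zero[of "u - v"] by simp
  qed
  then have "surj phi" using finite_UNIV_inj_surj[of phi] by simp
  then show ?thesis by (metis surjD)
qed

end

context ffab
begin

definition Vs :: "'a set" where "Vs = {v. cj v = - v \<and> v \<noteq> 0}"

lemma Qf_in_Vs: "x \<noteq> 0 \<Longrightarrow> Qf x \<in> Vs"
  using cj_Qf Qf_ne0 by (simp add: Vs_def)

lemma Vs_eq: "Vs = (\<lambda>f. eps * f) ` (Fq - {0})"
proof
  show "Vs \<subseteq> (\<lambda>f. eps * f) ` (Fq - {0})"
  proof
    fix v assume v: "v \<in> Vs"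
    have "v / eps \<in> Fq - {0}" using v eps_ne0 by (simp add: Vs_def Fq_iff cj_eps)
    moreover have "v = eps * (v / eps)" using eps_ne0 by simp
    ultimately show "v \<in> (\<lambda>f. eps * f) ` (Fq - {0})" by blast
  qed
next
  show "(\<lambda>f. eps * f) ` (Fq - {0}) \<subseteq> Vs"
    using eps_ne0 by (auto simp: Vs_def Fq_iff cj_eps)
qed

lemma card_Vs: "card Vs = q - 1"
proof -
  have "inj_on (\<lambda>f. eps * f) (Fq - {0})" using eps_ne0 by (auto intro: inj_onI)
  then show ?thesis using Vs_eq card_Fq_star by (simp add: card_image)
qed

lemma c2_in_Vs: "- 2 * c \<in> Vs"
  using two_ne0 c_ne0 by (simp add: Vs_def)

definition rep :: "'a \<Rightarrow> 'a" where
  "rep d = (if d - cj d = 0 then 1 else eps + eps * (d + cj d) / (d - cj d))"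

definition Ws :: "'a set" where "Ws = insert 1 ((\<lambda>\<mu>. eps + \<mu>) ` Fq)"

lemma rep_in_Ws: "rep d \<in> Ws"
proof (cases "d - cj d = 0")
  case True then show ?thesis by (simp add: rep_def Ws_def)
next
  case False
  have "cj (eps * (d + cj d) / (d - cj d)) = eps * (d + cj d) / (d - cj d)"
  proof -
    have "cj (eps * (d + cj d) / (d - cj d)) = (- eps) * (cj d + d) / (cj d - d)" by (simp add: cj_eps)
    also have "\<dots> = eps * (d + cj d) / (d - cj d)"
      by (metis (no_types, opaque_lifting) add.commute minus_diff_eq minus_divide_divide mult_minus_left)
    finally show ?thesis .
  qed
  then have "eps * (d + cj d) / (d - cj d) \<in> Fq" by (simp add: Fq_iff)
  then show ?thesis using False by (simp add: rep_def Ws_def)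
qed

lemma card_Ws: "card Ws \<le> q + 1"
proof -
  have "card Ws \<le> Suc (card ((\<lambda>\<mu>. eps + \<mu>) ` Fq))" unfolding Ws_def by (simp add: card_insert_if)
  also have "card ((\<lambda>\<mu>. eps + \<mu>) ` Fq) \<le> card Fq" by (rule card_image_le) simp
  finally show ?thesis using card_Fq by simp
qed

lemma rep_decomp:
  assumes "d \<noteq> 0"
  shows "\<exists>l. cj l = l \<and> l \<noteq> 0 \<and> d = l * rep d"
proof (cases "d - cj d = 0")
  case True
  then show ?thesis using assms by (intro exI[of _ d]) (simp add: rep_def)
next
  case False
  define l where "l = (d - cj d) / (2 * eps)"
  have "cj l = (cj d - d) / (2 * (- eps))" by (simp add: l_def cj_eps)
  also have "\<dots> = l" unfolding l_def
    by (metis minus_diff_eq minus_divide_divide mult_minus_right)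
  finally have "cj l = l" .
  moreover have "l \<noteq> 0" using False eps_ne0 two_ne0 by (simp add: l_def)
  moreover have "d = l * rep d"
    using False eps_ne0 two_ne0 by (simp add: rep_def l_def field_simps)
  ultimately show ?thesis by blast
qed

lemma Sv_le:
  assumes v: "cj v = - v" "v \<noteq> 0"
  shows "card {x. Qf x = v} \<le> q + 1"
proof (cases "{x. Qf x = v} = {}")
  case True then show ?thesis by simp
next
  case False
  then obtain x0 where x0: "Qf x0 = v" by blast
  define m0 where "m0 = phi x0"
  have m0: "m0 \<noteq> 0"
  proof
    assume "m0 = 0"
    then have "Bf x0 x0 = 0" using phi_T[of x0 x0] by (simp add: m0_def)
    then show False using Bf_self[of x0] x0 v two_ne0 by simp
  qed
  have key: "Bf x0 w = - l * Qf w"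
    if "cj l = l" "l \<noteq> 0" "Qf (x0 + l * w) = v" for l w
  proof -
    have "Qf (x0 + l * w) = Qf x0 + l * Bf x0 w + l^2 * Qf w"
      using Qf_add[of x0 "l * w"] Bf_scale[OF that(1)] Qf_scale[OF that(1)] by simp
    then have "l * (Bf x0 w + l * Qf w) = 0" using that x0 by (simp add: power2_eq_square algebra_simps)
    then show ?thesis using that(2) by (simp add: eq_neg_iff_add_eq_0)
  qed
  define f where "f y = rep (y - x0)" for y
  have inj: "inj_on f ({x. Qf x = v} - {x0})"
  proof (rule inj_onI)
    fix y1 y2 assume y1: "y1 \<in> {x. Qf x = v} - {x0}" and y2: "y2 \<in> {x. Qf x = v} - {x0}"
      and e: "f y1 = f y2"
    obtain l1 where l1: "cj l1 = l1" "l1 \<noteq> 0" "y1 - x0 = l1 * rep (y1 - x0)"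
      using rep_decomp[of "y1 - x0"] y1 by auto
    obtain l2 where l2: "cj l2 = l2" "l2 \<noteq> 0" "y2 - x0 = l2 * rep (y2 - x0)"
      using rep_decomp[of "y2 - x0"] y2 by auto
    define w where "w = rep (y1 - x0)"
    have w2: "rep (y2 - x0) = w" using e by (simp add: f_def w_def)
    have "w \<noteq> 0" using l1 y1 by (auto simp: w_def)
    then have qw: "Qf w \<noteq> 0" by (rule Qf_ne0)
    have "Bf x0 w = - l1 * Qf w"
      using key[OF l1(1,2)] l1(3) y1 by (simp add: w_def algebra_simps)
    moreover have "Bf x0 w = - l2 * Qf w"
      using key[OF l2(1,2)] l2(3) y2 w2 by (simp add: algebra_simps)
    ultimately have "l1 = l2" using qw by simp
    then show "y1 = y2" using l1(3) l2(3) w2 by (simp add: w_def)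
  qed
  define w0 where "w0 = rep (1 / m0)"
  have img: "f ` ({x. Qf x = v} - {x0}) \<subseteq> Ws - {w0}"
  proof
    fix z assume "z \<in> f ` ({x. Qf x = v} - {x0})"
    then obtain y where y: "Qf y = v" "y \<noteq> x0" and z: "z = f y" by blast
    have "z \<noteq> w0"
    proof
      assume zw: "z = w0"
      obtain l where l: "cj l = l" "l \<noteq> 0" "y - x0 = l * rep (y - x0)"
        using rep_decomp[of "y - x0"] y by auto
      obtain \<mu> where mu: "cj \<mu> = \<mu>" "\<mu> \<noteq> 0" "1 / m0 = \<mu> * rep (1 / m0)"
        using rep_decomp[of "1 / m0"] m0 by auto
      define d where "d = y - x0"
      have "rep d = rep (1 / m0)" using zw z by (simp add: f_def w0_def d_def)
      moreover have r_eq: "rep (1 / m0) = 1 / (\<mu> * m0)" using mu(2,3) m0 by (simp add: field_simps)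
      moreover have "d = l * rep d" using l(3) by (simp add: d_def)
      ultimately have dd: "d = l / (\<mu> * m0)" by simp
      have "Bf x0 d = m0 * d - cj (m0 * d)" using phi_T[of x0 d] by (simp add: m0_def)
      also have "m0 * d = l / \<mu>" using dd m0 mu(2) by (simp add: field_simps)
      finally have "Bf x0 d = 0" using l(1) mu(1) by simp
      moreover have "Qf (x0 + d) = v" using y by (simp add: d_def)
      ultimately have "Qf d = 0" using Qf_add[of x0 d] x0 by simp
      then have "d = 0" by (rule Qf_aniso)
      then show False using y by (simp add: d_def)
    qed
    then show "z \<in> Ws - {w0}" using z rep_in_Ws by (simp add: f_def)
  qed
  have "card ({x. Qf x = v} - {x0}) \<le> card (Ws - {w0})"
    using card_inj_on_le[OF inj img] by simp
  also have "\<dots> \<le> q" using card_Ws rep_in_Ws[of "1 / m0"] by (simp add: w0_def card_Diff_singleton)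
  finally have "card ({x. Qf x = v} - {x0}) \<le> q" .
  moreover have "card ({x. Qf x = v} - {x0}) = card {x. Qf x = v} - 1"
    using x0 by (simp add: card_Diff_singleton)
  moreover have "card {x. Qf x = v} \<ge> 1" using x0 by (metis (mono_tags) Collect_empty_eq One_nat_def Suc_leI card_gt_0_iff finite)
  ultimately show ?thesis by simp
qed

definition Sset :: "'a set" where "Sset = {x. Qf x = - 2 * c}"

lemma card_Sset: "card Sset = q + 1"
proof -
  have U: "UNIV - {0} = (\<Union>v\<in>Vs. {x. Qf x = v})"
  proof
    show "UNIV - {0} \<subseteq> (\<Union>v\<in>Vs. {x. Qf x = v})" using Qf_in_Vs by blast
    show "(\<Union>v\<in>Vs. {x. Qf x = v}) \<subseteq> UNIV - {0}" by (auto simp: Vs_def)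
  qed
  have "card (UNIV - {0::'a}) = (\<Sum>v\<in>Vs. card {x. Qf x = v})"
    unfolding U by (rule card_UN_disjoint) auto
  moreover have "card (UNIV - {0::'a}) = q^2 - 1" using card by (simp add: card_Diff_singleton)
  ultimately have sum_eq: "(\<Sum>v\<in>Vs. card {x. Qf x = v}) = q^2 - 1" by simp
  have le: "\<forall>v\<in>Vs. card {x. Qf x = v} \<le> q + 1" using Sv_le by (simp add: Vs_def)
  show ?thesis
  proof (rule ccontr)
    assume "card Sset \<noteq> q + 1"
    then have "card {x. Qf x = - 2 * c} < q + 1" using le c2_in_Vs by (simp add: Sset_def order_less_le)
    then have "(\<Sum>v\<in>Vs. card {x. Qf x = v}) < (\<Sum>v\<in>Vs. q + 1)"
      using le c2_in_Vs by (intro sum_strict_mono_ex1) auto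
    also have "\<dots> = (q - 1) * (q + 1)" using card_Vs by simp
    also have "\<dots> = q^2 - 1" using M_eq by (simp add: M_def)
    finally show False using sum_eq by simp
  qed
qed

end

context ffab
begin

definition hh :: nat where "hh = (q + 1) div 2"

lemma hh2: "2 * hh = q + 1" using oddq by (simp add: hh_def)

lemma hh_split: "hh = Suc ((q - 1) div 2)" using oddq q_ge3 by (simp add: hh_def) presburger

lemma hh_M: "hh * (q - 1) = M div 2"
proof -
  obtain u where u: "q = 2 * u + 1" using oddq oddE by blast
  have h1: "hh = u + 1" unfolding hh_def using u by simp
  have h2: "q - 1 = 2 * u" using u by simp
  have h3: "q + 1 = 2 * (u + 1)" using u by simp
  have "M = 2 * ((u + 1) * (2 * u))" unfolding M_eq h2 h3 by (simp only: mult_ac)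
  then have "M div 2 = (u + 1) * (2 * u)" by simp
  then show ?thesis by (simp only: h1 h2)
qed

lemma sq_pow_hh: "(z^2) ^ hh = Nf z"
proof -
  have "(z^2) ^ hh = z ^ (2 * hh)" by (simp add: power_mult)
  also have "\<dots> = Nf z" by (simp add: hh2 Nf_eq)
  finally show ?thesis .
qed

lemma Fq_pow_hh: "cj f = f \<Longrightarrow> f ^ hh = f * f ^ ((q - 1) div 2)"
  by (simp add: hh_split)

lemma Dd_pow_hh: "Dd ^ hh = - Dd"
  using Dd_pow by (simp add: hh_split)

lemma Nf_cj_fixed: "cj t = t \<Longrightarrow> Nf (t - 2 * c) = t^2 - 4 * c^2"
  by (simp add: Nf_def power2_eq_square algebra_simps)

lemma four_ne0: "(4::'a) \<noteq> 0"
proof -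
  have "(4::'a) = 2 * 2" by simp
  then show ?thesis using two_ne0 by (metis mult_eq_0_iff)
qed

lemma t_sq_ne: assumes "cj t = t" shows "t^2 - 4 * c^2 \<noteq> 0"
proof
  assume "t^2 - 4 * c^2 = 0"
  then have "Nf (t - 2 * c) = 0" using Nf_cj_fixed[OF assms] by simp
  then have "t - 2 * c = 0 \<or> cj (t - 2 * c) = 0" unfolding Nf_def by (simp only: mult_eq_0_iff)
  then have "t = 2 * c" by (simp only: cj_eq0_iff) simp
  then have "cj t = - 2 * c" by simp
  then have "4 * c = 0" using assms \<open>t = 2 * c\<close> by simp
  then show False using four_ne0 c_ne0 by simp
qed

definition Xt :: "'a \<Rightarrow> 'a set" where
  "Xt t = {x \<in> Sset. \<alpha> * x^2 + cj (\<alpha> * x^2) = t}"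

definition Pq :: "'a \<Rightarrow> 'a \<Rightarrow> 'a" where
  "Pq t n = Dd * n^2 + 4 * c * \<delta> * n + 4 * c^2 - t^2"

lemma Xt_props:
  assumes "x \<in> Xt t"
  shows "cj t = t" "Pq t (Nf x) = 0" "2 * (\<alpha> * x^2) = t - 2 * c - \<delta> * Nf x" "x \<noteq> 0"
proof -
  define a where "a = \<alpha> * x^2"
  define n where "n = Nf x"
  have q: "a - cj a + \<delta> * n = - 2 * c" using assms by (simp add: Xt_def Sset_def Qf_def a_def n_def)
  have tr: "a + cj a = t" using assms by (simp add: Xt_def a_def)
  show "cj t = t" using tr[symmetric] by (simp add: add.commute)
  have "2 * a = (a - cj a + \<delta> * n) + (a + cj a) - \<delta> * n" by (simp add: algebra_simps)
  also have "\<dots> = - 2 * c + t - \<delta> * n" by (simp only: q tr)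
  finally have a2': "2 * a = t - 2 * c - \<delta> * n" by simp
  then show a2: "2 * (\<alpha> * x^2) = t - 2 * c - \<delta> * Nf x" by (simp add: a_def n_def)
  have "2 * cj a = (a + cj a) - (a - cj a + \<delta> * n) + \<delta> * n" by (simp add: algebra_simps)
  also have "\<dots> = t - (- 2 * c) + \<delta> * n" by (simp only: q tr)
  finally have ca: "2 * cj a = t + 2 * c + \<delta> * n" by simp
  have an: "a * cj a = Nf \<alpha> * n^2" by (simp add: a_def n_def Nf_def power2_eq_square mult_ac)
  have "4 * (Nf \<alpha> * n^2) = (2 * a) * (2 * cj a)" using an by simp
  also have "\<dots> = (t - 2 * c - \<delta> * n) * (t + 2 * c + \<delta> * n)"
    using a2' ca by simp
  finally have "4 * (Nf \<alpha> * n^2) = (t - 2 * c - \<delta> * n) * (t + 2 * c + \<delta> * n)" .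
  then show "Pq t (Nf x) = 0"
    by (simp add: Pq_def Dd_def n_def[symmetric] power2_eq_square algebra_simps)
  show "x \<noteq> 0"
  proof
    assume "x = 0"
    then have "Qf x = 0" by simp
    then show False using assms two_ne0 c_ne0 by (simp add: Xt_def Sset_def)
  qed
qed

lemma Xt_uminus: "x \<in> Xt t \<Longrightarrow> - x \<in> Xt t"
  by (simp add: Xt_def Sset_def)

lemma Xt_same_N:
  assumes "x \<in> Xt t" "v \<in> Xt t" "Nf v = Nf x"
  shows "v = x \<or> v = - x"
proof -
  have "2 * (\<alpha> * v^2) = 2 * (\<alpha> * x^2)" using Xt_props(3)[OF assms(1)] Xt_props(3)[OF assms(2)] assms(3) by simp
  then have "v^2 = x^2" using two_ne0 a0 by simp
  then have "(v - x) * (v + x) = 0" by (simp add: power2_eq_square algebra_simps)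
  then show ?thesis by (simp add: eq_neg_iff_add_eq_0)
qed

lemma Pq_roots:
  assumes "Pq t n1 = 0" "Pq t r = 0"
  shows "r = n1 \<or> Dd * r = - 4 * c * \<delta> - Dd * n1"
proof -
  have "(r - n1) * (Dd * (r + n1) + 4 * c * \<delta>) = Pq t r - Pq t n1"
    by (simp add: Pq_def power2_eq_square algebra_simps)
  then have "(r - n1) * (Dd * (r + n1) + 4 * c * \<delta>) = 0" using assms by simp
  then have "r - n1 = 0 \<or> Dd * (r + n1) + 4 * c * \<delta> = 0" by simp
  then show ?thesis
  proof
    assume "r - n1 = 0" then show ?thesis by simp
  next
    assume E: "Dd * (r + n1) + 4 * c * \<delta> = 0"
    have "Dd * r = (Dd * (r + n1) + 4 * c * \<delta>) - 4 * c * \<delta> - Dd * n1" by (simp add: algebra_simps)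
    also have "\<dots> = - 4 * c * \<delta> - Dd * n1" using E by simp
    finally show ?thesis by simp
  qed
qed

lemma vieta:
  assumes "Pq t n1 = 0" "Dd * n2 = - 4 * c * \<delta> - Dd * n1"
  shows "Pq t n2 = 0" "Dd * n1 * n2 = 4 * c^2 - t^2"
proof -
  have "Dd * n1 * n2 = n1 * (Dd * n2)" by simp
  also have "\<dots> = - (Dd * n1^2 + 4 * c * \<delta> * n1)" by (simp only: assms(2)) (simp add: power2_eq_square algebra_simps)
  also have "\<dots> = 4 * c^2 - t^2" using assms(1) by (simp add: Pq_def algebra_simps)
  finally show p: "Dd * n1 * n2 = 4 * c^2 - t^2" .
  have "Pq t n2 = n2 * (Dd * n2) + 4 * c * \<delta> * n2 + 4 * c^2 - t^2" by (simp add: Pq_def power2_eq_square)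
  also have "\<dots> = - (Dd * n1 * n2) + 4 * c^2 - t^2" by (simp only: assms(2)) (simp add: algebra_simps)
  also have "\<dots> = 0" using p by simp
  finally show "Pq t n2 = 0" .
qed

lemma prod_id:
  assumes s: "Dd * n2 = - 4 * c * \<delta> - Dd * n1" and p: "Dd * n1 * n2 = 4 * c^2 - t^2"
    and a1: "2 * a1 = t - 2 * c - \<delta> * n1" and a2: "2 * a2 = t - 2 * c - \<delta> * n2"
  shows "Dd * a1 * a2 = Nf \<alpha> * (t - 2 * c)^2"
proof -
  have s': "Dd * (n1 + n2) = - 4 * c * \<delta>" using s by (simp add: algebra_simps)
  have "4 * (Dd * a1 * a2) = Dd * (2 * a1) * (2 * a2)" by simp
  also have "\<dots> = Dd * (t - 2 * c - \<delta> * n1) * (t - 2 * c - \<delta> * n2)" by (simp only: a1 a2)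
  also have "\<dots> = Dd * (t - 2 * c)^2 - \<delta> * (t - 2 * c) * (Dd * (n1 + n2)) + \<delta>^2 * (Dd * n1 * n2)"
    by (simp add: power2_eq_square algebra_simps)
  also have "\<dots> = Dd * (t - 2 * c)^2 - \<delta> * (t - 2 * c) * (- 4 * c * \<delta>) + \<delta>^2 * (4 * c^2 - t^2)"
    by (simp only: s' p)
  also have "\<dots> = 4 * (Nf \<alpha> * (t - 2 * c)^2)"
    by (simp add: Dd_def power2_eq_square algebra_simps)
  finally show ?thesis using four_ne0 by simp
qed

end

context ffab
begin

lemma Nf_uminus[simp]: "Nf (- x) = Nf x" by (simp add: Nf_def)

lemma Nf_divide: "Nf (z / s) = Nf z / Nf s" by (simp add: Nf_def)

lemma hh_pos: "hh > 0" using hh2 by simp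

lemma ns_key:
  assumes x: "x \<in> Xt t" and y: "y \<in> Xt t" and ne: "Nf x \<noteq> Nf y"
  shows "\<alpha> ^ (M div 2) = 1"
proof -
  define n1 where "n1 = Nf x"
  define n2 where "n2 = Nf y"
  have P1: "Pq t n1 = 0" and P2: "Pq t n2 = 0" using Xt_props(2) x y by (simp_all add: n1_def n2_def)
  have s: "Dd * n2 = - 4 * c * \<delta> - Dd * n1" using Pq_roots[OF P1 P2] ne by (auto simp: n1_def n2_def)
  have p: "Dd * n1 * n2 = 4 * c^2 - t^2" using vieta(2)[OF P1 s] .
  have ct: "cj t = t" using Xt_props(1) x .
  have n10: "n1 \<noteq> 0" and n20: "n2 \<noteq> 0" using Xt_props(4) x y Nf_ne0 by (auto simp: n1_def n2_def)
  have pid: "Dd * (\<alpha> * x^2) * (\<alpha> * y^2) = Nf \<alpha> * (t - 2 * c)^2"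
    using prod_id[OF s p] Xt_props(3) x y by (simp add: n1_def n2_def)
  have "\<alpha> * (Dd * \<alpha> * (x * y)^2) = \<alpha> * (cj \<alpha> * (t - 2 * c)^2)"
    using pid by (simp add: Nf_def power2_eq_square mult_ac)
  then have e: "Dd * \<alpha> * (x * y)^2 = cj \<alpha> * (t - 2 * c)^2" using a0 by simp
  have L: "(Dd * \<alpha> * (x * y)^2) ^ hh = - Dd * \<alpha> ^ hh * (n1 * n2)"
    by (simp add: power_mult_distrib Dd_pow_hh sq_pow_hh Nf_mult n1_def n2_def)
  moreover have R: "(cj \<alpha> * (t - 2 * c)^2) ^ hh = (- (cj \<alpha> ^ hh)) * (Dd * n1 * n2)"
  proof -
    have m: "t^2 - 4 * c^2 = - (Dd * n1 * n2)" using p by simp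
    have "(cj \<alpha> * (t - 2 * c)^2) ^ hh = cj \<alpha> ^ hh * Nf (t - 2 * c)"
      by (simp add: power_mult_distrib sq_pow_hh)
    also have "\<dots> = cj \<alpha> ^ hh * (- (Dd * n1 * n2))" by (simp only: Nf_cj_fixed[OF ct] m)
    finally show ?thesis by simp
  qed
  ultimately have E: "- Dd * \<alpha> ^ hh * (n1 * n2) = (- (cj \<alpha> ^ hh)) * (Dd * n1 * n2)"
    using e by metis
  have "(Dd * (n1 * n2)) * (\<alpha> ^ hh - cj \<alpha> ^ hh) = - (- Dd * \<alpha> ^ hh * (n1 * n2)) + (- (cj \<alpha> ^ hh)) * (Dd * n1 * n2)"
    by (simp add: algebra_simps)
  also have "\<dots> = 0" using E by simp
  finally have "\<alpha> ^ hh - cj \<alpha> ^ hh = 0" using Dd_ne0 n10 n20 by simp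
  then have ah: "\<alpha> ^ hh = cj (\<alpha> ^ hh)" by simp
  have "(\<alpha> ^ hh) ^ (q - 1) = 1" using Fq_pow1[OF ah[symmetric]] a0 by simp
  moreover have "(\<alpha> ^ hh) ^ (q - 1) = \<alpha> ^ (M div 2)" by (simp only: power_mult[symmetric] hh_M)
  ultimately show ?thesis by simp
qed

lemma ns_card:
  assumes "\<not> (\<exists>y. y^2 = \<alpha>)"
  shows "card (Xt t) \<le> 2"
proof (cases "Xt t = {}")
  case True then show ?thesis by simp
next
  case False
  then obtain x where x: "x \<in> Xt t" by blast
  have "Xt t \<subseteq> {x, - x}"
  proof
    fix v assume v: "v \<in> Xt t"
    have "Nf v = Nf x"
    proof (rule ccontr)
      assume "Nf v \<noteq> Nf x"
      then have "\<alpha> ^ (M div 2) = 1" using ns_key[OF v x] by simp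
      then show False using sq_crit[OF a0] assms by blast
    qed
    then show "v \<in> {x, - x}" using Xt_same_N[OF x v] by blast
  qed
  then have "card (Xt t) \<le> card {x, - x}" by (intro card_mono) auto
  also have "\<dots> \<le> 2" by (simp add: card_insert_if)
  finally show ?thesis .
qed

lemma sq_construct:
  assumes s: "s^2 = \<alpha>" and x: "x \<in> Xt t"
    and s2: "Dd * n2 = - 4 * c * \<delta> - Dd * Nf x" and ne: "n2 \<noteq> Nf x"
  shows "\<exists>y \<in> Xt t. Nf y = n2"
proof -
  define n1 where "n1 = Nf x"
  have P1: "Pq t n1 = 0" using Xt_props(2) x by (simp add: n1_def)
  have s2': "Dd * n2 = - 4 * c * \<delta> - Dd * n1" using s2 by (simp add: n1_def)
  have p: "Dd * n1 * n2 = 4 * c^2 - t^2" using vieta(2)[OF P1 s2'] .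
  have ct: "cj t = t" using Xt_props(1) x .
  have s0: "s \<noteq> 0" using s a0 by auto
  have n10: "n1 \<noteq> 0" using Xt_props(4) x Nf_ne0 by (auto simp: n1_def)
  have n20: "n2 \<noteq> 0"
  proof
    assume "n2 = 0"
    then have "t^2 - 4 * c^2 = 0" using p by simp
    then show False using t_sq_ne[OF ct] by simp
  qed
  have n2e: "n2 = (- 4 * c * \<delta> - Dd * n1) / Dd" using s2' Dd_ne0 by (simp add: field_simps)
  have cn2: "cj n2 = n2" unfolding n2e by (simp add: n1_def)
  define a2 where "a2 = (t - 2 * c - \<delta> * n2) / 2"
  have a2e: "2 * a2 = t - 2 * c - \<delta> * n2" using two_ne0 by (simp add: a2_def)
  have a1e: "2 * (\<alpha> * x^2) = t - 2 * c - \<delta> * n1" using Xt_props(3) x by (simp add: n1_def)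
  have pid: "Dd * (\<alpha> * x^2) * a2 = Nf \<alpha> * (t - 2 * c)^2" using prod_id[OF s2' p a1e a2e] .
  have ahh: "\<alpha> ^ hh = Nf s" using sq_pow_hh[of s] s by simp
  have Nah: "Nf \<alpha> ^ hh = Nf s * Nf s"
  proof -
    have "Nf \<alpha> ^ hh = \<alpha> ^ hh * cj (\<alpha> ^ hh)" by (simp add: Nf_def power_mult_distrib)
    also have "\<dots> = Nf s * Nf s" using ahh by simp
    finally show ?thesis .
  qed
  have L: "(Dd * (\<alpha> * x^2) * a2) ^ hh = - Dd * (Nf s * n1) * a2 ^ hh"
    using ahh by (simp add: power_mult_distrib Dd_pow_hh sq_pow_hh n1_def)
  moreover have "(Nf \<alpha> * (t - 2 * c)^2) ^ hh = - (Nf s * Nf s) * (Dd * n1 * n2)"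
  proof -
    have m: "t^2 - 4 * c^2 = - (Dd * n1 * n2)" using p by simp
    have "(Nf \<alpha> * (t - 2 * c)^2) ^ hh = Nf \<alpha> ^ hh * Nf (t - 2 * c)"
      by (simp add: power_mult_distrib sq_pow_hh)
    also have "\<dots> = (Nf s * Nf s) * (- (Dd * n1 * n2))" by (simp only: Nf_cj_fixed[OF ct] m Nah)
    finally show ?thesis by simp
  qed
  ultimately have E: "- Dd * (Nf s * n1) * a2 ^ hh = - (Nf s * Nf s) * (Dd * n1 * n2)" using pid by metis
  have "(Dd * Nf s * n1) * (a2 ^ hh - Nf s * n2) = - (- Dd * (Nf s * n1) * a2 ^ hh) + (- (Nf s * Nf s) * (Dd * n1 * n2))"
    by (simp add: algebra_simps)
  also have "\<dots> = 0" using E by simp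
  finally have "a2 ^ hh - Nf s * n2 = 0" using Dd_ne0 n10 Nf_ne0[OF s0] by simp
  then have a2h: "a2 ^ hh = Nf s * n2" by simp
  have a20: "a2 \<noteq> 0"
  proof
    assume "a2 = 0"
    then have "a2 ^ hh = 0" using hh_pos by simp
    then show False using a2h n20 Nf_ne0[OF s0] by simp
  qed
  have "a2 ^ (M div 2) = (a2 ^ hh) ^ (q - 1)" by (simp only: power_mult[symmetric] hh_M)
  also have "\<dots> = 1" unfolding a2h
    by (rule Fq_pow1) (use cn2 n20 Nf_ne0[OF s0] in simp_all)
  finally obtain z where z: "z^2 = a2" using sq_crit[OF a20] by blast
  have Nz: "Nf z = Nf s * n2" using sq_pow_hh[of z] z a2h by simp
  define y where "y = z / s"
  have ay: "\<alpha> * y^2 = a2" using s s0 z a0 by (simp add: y_def power_divide)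
  have Ny: "Nf y = n2" using Nz Nf_ne0[OF s0] by (simp add: y_def Nf_divide)
  have ca2: "2 * cj a2 = t + 2 * c + \<delta> * n2"
  proof -
    have "cj (2 * a2) = t + 2 * c + \<delta> * n2" unfolding a2e using ct cn2 by simp
    then show ?thesis by simp
  qed
  have tr: "\<alpha> * y^2 + cj (\<alpha> * y^2) = t"
  proof -
    have "2 * (a2 + cj a2) = 2 * t" using a2e ca2 by (simp add: algebra_simps)
    then have "a2 + cj a2 = t" using mult_left_cancel[OF two_ne0] by blast
    then show ?thesis using ay by simp
  qed
  have qy: "Qf y = - 2 * c"
  proof -
    have "Qf y = \<alpha> * y^2 - cj (\<alpha> * y^2) + \<delta> * Nf y" by (simp add: Qf_def)
    also have "\<dots> = a2 - cj a2 + \<delta> * n2" using ay Ny by simp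
    finally have "2 * Qf y = 2 * (a2 - cj a2 + \<delta> * n2)" by simp
    also have "\<dots> = 2 * a2 - 2 * cj a2 + 2 * (\<delta> * n2)" by (simp add: algebra_simps)
    also have "\<dots> = 2 * (- 2 * c)" unfolding a2e ca2 by (simp add: algebra_simps)
    finally show ?thesis using mult_left_cancel[OF two_ne0] by blast
  qed
  have "y \<in> Xt t" using tr qy by (simp add: Xt_def Sset_def)
  then show ?thesis using Ny by blast
qed

lemma sq_card:
  assumes s: "s^2 = \<alpha>"
  shows "card (Xt t) = 0 \<or> card (Xt t) = 4 \<or> (card (Xt t) = 2 \<and> Dd * t^2 = 16 * c^2 * Nf \<alpha>)"
proof (cases "Xt t = {}")
  case True then show ?thesis by simp
next
  case False
  then obtain x where x: "x \<in> Xt t" by blast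
  define n1 where "n1 = Nf x"
  define n2 where "n2 = (- 4 * c * \<delta> - Dd * n1) / Dd"
  have s2: "Dd * n2 = - 4 * c * \<delta> - Dd * n1" using Dd_ne0 by (simp add: n2_def)
  have P1: "Pq t n1 = 0" using Xt_props(2) x by (simp add: n1_def)
  have x0: "x \<noteq> 0" using Xt_props(4) x .
  have xx: "x \<noteq> - x" using x0 two_ne0 by (metis eq_neg_iff_add_eq_0 mult_2 mult_eq_0_iff)
  have roots: "Nf v = n1 \<or> Nf v = n2" if "v \<in> Xt t" for v
  proof -
    have "Pq t (Nf v) = 0" using Xt_props(2) that .
    then have "Nf v = n1 \<or> Dd * Nf v = - 4 * c * \<delta> - Dd * n1" using Pq_roots[OF P1] by blast
    then show ?thesis
    proof
      assume "Dd * Nf v = - 4 * c * \<delta> - Dd * n1"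
      then have "Dd * Nf v = Dd * n2" using s2 by simp
      then show ?thesis using Dd_ne0 by simp
    qed simp
  qed
  show ?thesis
  proof (cases "n2 = n1")
    case False
    obtain y where y: "y \<in> Xt t" "Nf y = n2" using sq_construct[OF s x] s2 False by (auto simp: n1_def)
    have y0: "y \<noteq> 0" using Xt_props(4) y(1) .
    have yy: "y \<noteq> - y" using y0 two_ne0 by (metis eq_neg_iff_add_eq_0 mult_2 mult_eq_0_iff)
    have "Xt t = {x, - x, y, - y}"
    proof
      show "Xt t \<subseteq> {x, - x, y, - y}"
      proof
        fix v assume v: "v \<in> Xt t"
        from roots[OF v] show "v \<in> {x, - x, y, - y}"
        proof
          assume "Nf v = n1" then show ?thesis using Xt_same_N[OF x v] by (auto simp: n1_def)
        next
          assume "Nf v = n2" then show ?thesis using Xt_same_N[OF y(1) v] y(2) by auto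
        qed
      qed
      show "{x, - x, y, - y} \<subseteq> Xt t" using x y(1) Xt_uminus by auto
    qed
    moreover have "x \<noteq> y" "x \<noteq> - y" "- x \<noteq> y" "- x \<noteq> - y"
      using False y(2) by (auto simp: n1_def)
    ultimately have "card (Xt t) = 4" using xx yy by simp
    then show ?thesis by simp
  next
    case True
    have "Xt t = {x, - x}"
    proof
      show "Xt t \<subseteq> {x, - x}"
      proof
        fix v assume v: "v \<in> Xt t"
        then have "Nf v = Nf x" using roots[OF v] True by (auto simp: n1_def)
        then show "v \<in> {x, - x}" using Xt_same_N[OF x v] by blast
      qed
      show "{x, - x} \<subseteq> Xt t" using x Xt_uminus by auto
    qed
    then have c2: "card (Xt t) = 2" using xx by simp
    have e: "Dd * n1 = - 2 * c * \<delta>"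
    proof -
      have "2 * (Dd * n1) = 2 * (- 2 * c * \<delta>)" using s2 True by (simp add: algebra_simps)
      then show ?thesis using mult_left_cancel[OF two_ne0, of "Dd * n1" "- 2 * c * \<delta>"] by (simp only:)
    qed
    have "0 = Dd * Pq t n1" using P1 by simp
    also have "\<dots> = (Dd * n1)^2 + 4 * c * \<delta> * (Dd * n1) + Dd * (4 * c^2 - t^2)"
      by (simp add: Pq_def power2_eq_square algebra_simps)
    also have "\<dots> = (- 2 * c * \<delta>)^2 + 4 * c * \<delta> * (- 2 * c * \<delta>) + Dd * (4 * c^2 - t^2)"
      by (simp only: e)
    finally have "Dd * t^2 = 4 * c^2 * (Dd - \<delta>^2)" by (simp add: power2_eq_square algebra_simps)
    then have "Dd * t^2 = 16 * c^2 * Nf \<alpha>" by (simp add: Dd_def algebra_simps)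
    then show ?thesis using c2 by simp
  qed
qed

end

lemma pt_self: "v \<in> pt v"
  unfolding pt_def by (rule CollectI, rule exI[of _ 1]) simp

lemma pt_eq_scalar:
  assumes "pt u = pt v"
  shows "\<exists>k. k \<noteq> 0 \<and> v = (k * fst u, k * fst (snd u), k * snd (snd u))"
proof -
  have "v \<in> pt u" using assms pt_self by metis
  then show ?thesis unfolding pt_def by blast
qed

lemma pt_scale:
  fixes a b z k :: "'a::field"
  assumes "k \<noteq> 0"
  shows "pt (k * a, k * b, k * z) = pt (a, b, z)"
proof
  show "pt (k * a, k * b, k * z) \<subseteq> pt (a, b, z)"
  proof
    fix w assume "w \<in> pt (k * a, k * b, k * z)"
    then obtain j where j: "j \<noteq> 0" "w = (j * (k * a), j * (k * b), j * (k * z))" unfolding pt_def by auto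
    then show "w \<in> pt (a, b, z)" unfolding pt_def using assms
      by (intro CollectI exI[of _ "j * k"]) (simp add: mult_ac)
  qed
next
  show "pt (a, b, z) \<subseteq> pt (k * a, k * b, k * z)"
  proof
    fix w assume "w \<in> pt (a, b, z)"
    then obtain j where j: "j \<noteq> 0" "w = (j * a, j * b, j * z)" unfolding pt_def by auto
    then show "w \<in> pt (k * a, k * b, k * z)" unfolding pt_def using assms
      by (intro CollectI exI[of _ "j / k"]) simp
  qed
qed

lemma pt_aff_eq: "pt (x, y, 1) = pt (x', y', (1::'a::field)) \<longleftrightarrow> x = x' \<and> y = y'"
proof
  assume h: "pt (x, y, 1) = pt (x', y', 1)"
  show "x = x' \<and> y = y'" using pt_eq_scalar[OF h] by auto
qed simp

lemma pt_aff_inf: "pt (x, y, 1) \<noteq> pt (a, b, (0::'a::field))"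
proof
  assume h: "pt (x, y, 1) = pt (a, b, 0)"
  show False using pt_eq_scalar[OF h] by auto
qed

lemma dot3_scale: "dot3 l (k * a, k * b, k * z) = k * dot3 l (a, b, z)"
  by (simp add: dot3_def algebra_simps)

lemma mem_line:
  assumes "v \<noteq> (0, 0, 0)"
  shows "pt v \<in> line l \<longleftrightarrow> dot3 l v = 0"
proof
  assume "pt v \<in> line l"
  then obtain v' where v': "v' \<noteq> (0,0,0)" "dot3 l v' = 0" "pt v = pt v'" unfolding line_def by auto
  then obtain k where k: "k \<noteq> 0" "v = (k * fst v', k * fst (snd v'), k * snd (snd v'))"
    using pt_eq_scalar[of v' v] by metis
  then show "dot3 l v = 0" using v'(2) dot3_scale[of l k "fst v'" "fst (snd v')" "snd (snd v')"] by simp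
next
  assume "dot3 l v = 0"
  then show "pt v \<in> line l" using assms unfolding line_def by blast
qed

lemma line_elem:
  assumes "P \<in> line l"
  shows "\<exists>v. v \<noteq> (0, 0, 0) \<and> P = pt v \<and> dot3 l v = 0"
  using assms unfolding line_def by blast

lemma pt_cases:
  fixes v :: "'a::field vec3"
  assumes "v \<noteq> (0, 0, 0)"
  shows "(\<exists>x y. pt v = pt (x, y, 1)) \<or> (\<exists>a b. (a, b) \<noteq> (0, 0) \<and> v = (a, b, 0))"
proof (cases "snd (snd v) = 0")
  case True
  then show ?thesis using assms by (cases v) auto
next
  case False
  obtain a b z where v: "v = (a, b, z)" by (cases v)
  then have z: "z \<noteq> 0" using False by simp
  have "pt (z * (a / z), z * (b / z), z * 1) = pt (a / z, b / z, 1)" using pt_scale[OF z] .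
  then have "pt v = pt (a / z, b / z, 1)" using z v by simp
  then show ?thesis by blast
qed

lemma finite_vec3_sets: "finite (S :: 'a::finite vec3 set set)"
  by (rule finite_subset[OF subset_UNIV]) simp

context ffab
begin

definition gf :: "'a \<Rightarrow> 'a" where "gf x = \<alpha> * x ^ 2 + \<beta> * x ^ (q + 1)"

lemma gf_T: "gf x - cj (gf x) = Qf x"
proof -
  have g: "gf x = \<alpha> * x^2 + \<beta> * Nf x" by (simp add: gf_def Nf_eq)
  show ?thesis by (simp add: g Qf_def \<delta>_def algebra_simps)
qed

lemma cj_fix_iff: "cj z = z \<longleftrightarrow> z - cj z = 0" by auto

abbreviation UU :: "'a vec3 set set" where "UU \<equiv> unital_ab q \<alpha> \<beta>"

lemma U_inf: "pt (0, 1, 0) \<in> UU" by (simp add: unital_ab_def)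

lemma U_aff: "pt (x, y, 1) \<in> UU \<longleftrightarrow> cj (y - gf x) = y - gf x"
proof
  assume "pt (x, y, 1) \<in> UU"
  moreover have "pt (x, y, 1) \<noteq> pt (0, 1, 0)" by (rule pt_aff_inf)
  ultimately have "pt (x, y, 1) \<in> {pt (x, \<alpha> * x ^ 2 + \<beta> * x ^ (q + 1) + r, 1) | x r. r \<in> subfield_q q}"
    unfolding unital_ab_def by blast
  then obtain x' r where e: "pt (x, y, 1) = pt (x', \<alpha> * x' ^ 2 + \<beta> * x' ^ (q + 1) + r, 1)"
    and r: "r \<in> subfield_q q" by blast
  then have "x = x' \<and> y = \<alpha> * x' ^ 2 + \<beta> * x' ^ (q + 1) + r" by (simp only: pt_aff_eq)
  then have "x = x'" "y = gf x + r" by (auto simp: gf_def)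
  then show "cj (y - gf x) = y - gf x" using r by (simp add: Fq_iff[symmetric] Fq_def)
next
  assume "cj (y - gf x) = y - gf x"
  then have "y - gf x \<in> subfield_q q" unfolding Fq_def[symmetric] Fq_iff .
  moreover have "pt (x, y, 1) = pt (x, \<alpha> * x ^ 2 + \<beta> * x ^ (q + 1) + (y - gf x), 1)"
    by (simp add: gf_def)
  ultimately show "pt (x, y, 1) \<in> UU" unfolding unital_ab_def by blast
qed

lemma U_cases:
  assumes "P \<in> UU"
  shows "P = pt (0, 1, 0) \<or> (\<exists>x y. P = pt (x, y, 1) \<and> cj (y - gf x) = y - gf x)"
proof -
  have "P = pt (0, 1, 0) \<or> (\<exists>x r. P = pt (x, gf x + r, 1) \<and> r \<in> subfield_q q)"
    using assms by (auto simp: unital_ab_def gf_def)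
  then show ?thesis
  proof
    assume "\<exists>x r. P = pt (x, gf x + r, 1) \<and> r \<in> subfield_q q"
    then obtain x r where "P = pt (x, gf x + r, 1)" "r \<in> subfield_q q" by blast
    then show ?thesis by (intro disjI2 exI[of _ x] exI[of _ "gf x + r"]) (simp add: Fq_iff[symmetric] Fq_def)
  qed simp
qed

lemma aff_cond:
  assumes "phi u = m"
  shows "cj (m * x + c - gf x) = m * x + c - gf x \<longleftrightarrow> Qf (x - u) = Qf u + 2 * c"
proof -
  have "(m * x + c - gf x) - cj (m * x + c - gf x) = (m * x - cj (m * x)) + 2 * c - (gf x - cj (gf x))"
    by (simp add: algebra_simps)
  also have "\<dots> = Bf u x + 2 * c - Qf x" using phi_T[of u x] assms gf_T by simp
  finally have e: "(m * x + c - gf x) - cj (m * x + c - gf x) = Bf u x + 2 * c - Qf x" .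
  have e2: "Qf (x - u) - (Qf u + 2 * c) = - (Bf u x + 2 * c - Qf x)" using Qf_sub[of x u] by (simp add: algebra_simps)
  have "cj (m * x + c - gf x) = m * x + c - gf x \<longleftrightarrow> (m * x + c - gf x) - cj (m * x + c - gf x) = 0"
    by (rule cj_fix_iff)
  also have "\<dots> \<longleftrightarrow> Bf u x + 2 * c - Qf x = 0" by (simp only: e)
  also have "\<dots> \<longleftrightarrow> Qf (x - u) - (Qf u + 2 * c) = 0" by (simp only: e2 neg_equal_0_iff_equal)
  also have "\<dots> \<longleftrightarrow> Qf (x - u) = Qf u + 2 * c" by simp
  finally show ?thesis .
qed

definition hfun :: "'a \<Rightarrow> 'a" where "hfun x = \<alpha> * x^2 + cj (\<alpha> * x^2) - c"

definition Pset :: "'a vec3 set set" where "Pset = (\<lambda>x. pt (x, hfun x, 1)) ` Sset"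

lemma hfun_eq: assumes "Qf u = - 2 * c" shows "phi u * u + c = hfun u"
proof -
  have "phi u * u + c - hfun u = Qf u + 2 * c"
    by (simp add: phi_def hfun_def Qf_def Nf_def power2_eq_square algebra_simps)
  then have "phi u * u + c - hfun u = 0" using assms by simp
  then show ?thesis by simp
qed

end

lemma card_le2:
  assumes "finite A" "\<And>a b x. a \<in> A \<Longrightarrow> b \<in> A \<Longrightarrow> x \<in> A \<Longrightarrow> a \<noteq> b \<Longrightarrow> x = a \<or> x = b"
  shows "card A \<le> 2"
proof (cases "A = {}")
  case True then show ?thesis by simp
next
  case False
  then obtain a where a: "a \<in> A" by blast
  show ?thesis
  proof (cases "A \<subseteq> {a}")
    case True
    then have "card A \<le> card {a}" by (intro card_mono) auto
    then show ?thesis by simp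
  next
    case False
    then obtain b where b: "b \<in> A" "b \<noteq> a" by blast
    have "A \<subseteq> {a, b}" using assms(2)[OF a b(1)] b(2) by blast
    then have "card A \<le> card {a, b}" by (intro card_mono) auto
    also have "\<dots> \<le> 2" by (simp add: card_insert_if)
    finally show ?thesis .
  qed
qed

context ffab
begin

lemma gf0: "gf 0 = 0" by (simp add: gf_def)

lemma pedal_eq: "pedal UU (pt (0, c, 1)) = Pset"
proof
  show "pedal UU (pt (0, c, 1)) \<subseteq> Pset"
  proof
    fix P assume "P \<in> pedal UU (pt (0, c, 1))"
    then obtain l where l: "l \<in> lines" "pt (0, c, 1) \<in> l" "l \<inter> UU = {P}"
      unfolding pedal_def by blast
    then obtain L where L: "l = line L" "L \<noteq> (0, 0, 0)" unfolding lines_def by blast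
    obtain L1 L2 L3 where Le: "L = (L1, L2, L3)" by (cases L)
    have "dot3 L (0, c, 1) = 0" using l(2) L mem_line[of "(0, c, 1)" L] by simp
    then have "L2 * c + L3 = 0" using Le by (simp add: dot3_def)
    then have L3: "L3 = - L2 * c" by (metis add.commute eq_neg_iff_add_eq_0 mult_minus_left)
    show "P \<in> Pset"
    proof (cases "L2 = 0")
      case True
      have "pt (0, 1, 0) \<in> l" using L Le True L3 by (simp add: mem_line dot3_def)
      moreover have "pt (0, 0, 1) \<in> l" using L Le True L3 by (simp add: mem_line dot3_def)
      moreover have "pt (0, 0, 1) \<in> UU" using U_aff[of 0 0] gf0 by simp
      ultimately have "pt (0, 1, 0) \<in> l \<inter> UU" "pt (0, 0, 1) \<in> l \<inter> UU" using U_inf by auto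
      then have "pt (0, 1, 0) = pt (0, 0, (1::'a))" using l(3) by auto
      then show ?thesis using pt_aff_inf by metis
    next
      case False
      define m where "m = - L1 / L2"
      have online: "pt (x, y, 1) \<in> l \<longleftrightarrow> y = m * x + c" for x y
      proof -
        have "pt (x, y, 1) \<in> l \<longleftrightarrow> L1 * x + L2 * y + L3 = 0" using L Le by (simp add: mem_line dot3_def)
        also have "\<dots> \<longleftrightarrow> y = m * x + c" using False L3 by (simp add: m_def field_simps)
        finally show ?thesis .
      qed
      have "P \<in> UU" "P \<in> l" using l(3) by auto
      have "P \<noteq> pt (0, 1, 0)"
      proof
        assume "P = pt (0, 1, 0)"
        then have "dot3 L (0, 1, 0) = 0" using \<open>P \<in> l\<close> L mem_line[of "(0, 1, 0)" L] by simp
        then show False using Le False by (simp add: dot3_def)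
      qed
      then obtain x0 y0 where P: "P = pt (x0, y0, 1)" "cj (y0 - gf x0) = y0 - gf x0"
        using U_cases[OF \<open>P \<in> UU\<close>] by blast
      then have y0: "y0 = m * x0 + c" using online \<open>P \<in> l\<close> by simp
      obtain u where u: "phi u = m" using phi_surj by blast
      have inU: "pt (x, m * x + c, 1) \<in> UU \<longleftrightarrow> Qf (x - u) = Qf u + 2 * c" for x
        using U_aff aff_cond[OF u] by simp
      have q0: "Qf (x0 - u) = Qf u + 2 * c" using inU[of x0] P y0 \<open>P \<in> UU\<close> by simp
      have qu: "Qf u = - 2 * c"
      proof (rule ccontr)
        assume ne: "Qf u \<noteq> - 2 * c"
        define x1 where "x1 = 2 * u - x0"
        have "x1 - u = u - x0" by (simp add: x1_def algebra_simps)
        moreover have "Qf (u - x0) = Qf (x0 - u)" using Qf_uminus[of "x0 - u"] by simp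
        ultimately have "Qf (x1 - u) = Qf u + 2 * c" using q0 by simp
        then have "pt (x1, m * x1 + c, 1) \<in> l \<inter> UU" using inU online by simp
        then have "pt (x1, m * x1 + c, 1) = P" using l(3) by auto
        then have "pt (x1, m * x1 + c, 1) = pt (x0, y0, 1)" using P(1) by simp
        then have "x1 = x0 \<and> m * x1 + c = y0" by (metis pt_aff_eq)
        then have "x1 = x0" by simp
        then have "x0 - u = 0" using two_ne0 by (simp add: x1_def algebra_simps)
        then show False using q0 ne by (simp add: algebra_simps eq_neg_iff_add_eq_0)
      qed
      then have "Qf (x0 - u) = 0" using q0 by simp
      then have "x0 = u" using Qf_aniso[of "x0 - u"] by simp
      then have "P = pt (u, hfun u, 1)" using P(1) y0 hfun_eq[OF qu] u by simp
      then show ?thesis using qu by (simp add: Pset_def Sset_def)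
    qed
  qed
next
  show "Pset \<subseteq> pedal UU (pt (0, c, 1))"
  proof
    fix P assume "P \<in> Pset"
    then obtain u where u: "Qf u = - 2 * c" "P = pt (u, hfun u, 1)" by (auto simp: Pset_def Sset_def)
    define m where "m = phi u"
    define l where "l = line (m, -1, c)"
    have "(-1::'a) \<noteq> 0" by (metis neg_equal_0_iff_equal one_neq_zero)
    then have "(m, -1, c) \<noteq> (0, 0, (0::'a))" using c_ne0 by simp
    then have lin: "l \<in> lines" unfolding l_def lines_def by blast
    have R: "pt (0, c, 1) \<in> l" unfolding l_def by (simp add: mem_line dot3_def)
    have online: "pt (x, y, 1) \<in> l \<longleftrightarrow> y = m * x + c" for x y
      unfolding l_def by (simp add: mem_line dot3_def algebra_simps) (auto simp: algebra_simps)
    have inU: "pt (x, m * x + c, 1) \<in> UU \<longleftrightarrow> Qf (x - u) = Qf u + 2 * c" for x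
      using U_aff aff_cond[OF m_def[symmetric]] by simp
    have hm: "hfun u = m * u + c" using hfun_eq[OF u(1)] by (simp add: m_def)
    have "l \<inter> UU = {P}"
    proof
      show "l \<inter> UU \<subseteq> {P}"
      proof
        fix Q assume Q: "Q \<in> l \<inter> UU"
        have "Q \<noteq> pt (0, 1, 0)"
        proof
          assume "Q = pt (0, 1, 0)"
          then have "pt (0, 1, 0) \<in> l" using Q by simp
          then show False unfolding l_def by (simp add: mem_line dot3_def)
        qed
        then obtain x y where xy: "Q = pt (x, y, 1)" "cj (y - gf x) = y - gf x"
          using U_cases Q by blast
        then have y: "y = m * x + c" using online Q by simp
        then have "Qf (x - u) = Qf u + 2 * c" using inU[of x] xy Q by simp
        then have "Qf (x - u) = 0" using u(1) by simp
        then have "x = u" using Qf_aniso[of "x - u"] by simp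
        then show "Q \<in> {P}" using xy y u(2) hm by simp
      qed
      show "{P} \<subseteq> l \<inter> UU"
      proof -
        have "P \<in> l" using u(2) online hm by simp
        moreover have "P \<in> UU" using u hm inU[of u] by simp
        ultimately show ?thesis by simp
      qed
    qed
    then show "P \<in> pedal UU (pt (0, c, 1))" unfolding pedal_def using lin R by blast
  qed
qed

definition Zs :: "'a vec3 \<Rightarrow> 'a set" where
  "Zs L = {x \<in> Sset. fst L * x + fst (snd L) * hfun x + snd (snd L) = 0}"

lemma card_line_Pset:
  assumes "L \<noteq> (0, 0, 0)"
  shows "card (line L \<inter> Pset) = card (Zs L)"
proof -
  have "line L \<inter> Pset = (\<lambda>x. pt (x, hfun x, 1)) ` Zs L"
    by (auto simp: Pset_def Zs_def mem_line dot3_def)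
  moreover have "inj_on (\<lambda>x. pt (x, hfun x, 1)) (Zs L)"
    by (rule inj_onI) (simp add: pt_aff_eq)
  ultimately show ?thesis by (simp add: card_image)
qed

lemma hfun_Tr: "cj (hfun x + c) = hfun x + c"
  by (simp add: hfun_def add.commute)

lemma Zs_A: "fst L = 0 \<Longrightarrow> fst (snd L) = 0 \<Longrightarrow> L \<noteq> (0, 0, 0) \<Longrightarrow> Zs L = {}"
  by (cases L) (auto simp: Zs_def)

lemma Zs_B:
  assumes "fst (snd L) = 0" "fst L \<noteq> 0"
  shows "card (Zs L) \<le> 1"
proof -
  have "Zs L \<subseteq> {- snd (snd L) / fst L}"
    using assms by (auto simp: Zs_def field_simps eq_neg_iff_add_eq_0)
  then have "card (Zs L) \<le> card {- snd (snd L) / fst L}" by (intro card_mono) auto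
  then show ?thesis by simp
qed

lemma Zs_C:
  assumes "fst (snd L) \<noteq> 0" "fst L = 0"
  shows "Zs L = Xt (c - snd (snd L) / fst (snd L))"
proof -
  have "fst (snd L) * hfun x + snd (snd L) = 0 \<longleftrightarrow>
        \<alpha> * x^2 + cj (\<alpha> * x^2) = c - snd (snd L) / fst (snd L)" for x
    using assms(1) by (simp add: hfun_def field_simps)
  then show ?thesis using assms(2) by (auto simp: Zs_def Xt_def)
qed

lemma line_param:
  assumes "cj l = l" "Qf (a + l * w) = Qf a"
  shows "l * (Bf a w + l * Qf w) = 0"
proof -
  have "Qf (a + l * w) = Qf a + l * Bf a w + l^2 * Qf w"
    using Qf_add[of a "l * w"] Bf_scale[OF assms(1)] Qf_scale[OF assms(1)] by simp
  then show ?thesis using assms(2) by (simp add: power2_eq_square algebra_simps)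
qed

lemma Zs_D:
  assumes L2: "fst (snd L) \<noteq> 0" and L1: "fst L \<noteq> 0"
  shows "card (Zs L) \<le> 2"
proof (rule card_le2)
  show "finite (Zs L)" by simp
  fix a b x assume a: "a \<in> Zs L" and b: "b \<in> Zs L" and x: "x \<in> Zs L" and ab: "a \<noteq> b"
  define \<rho> where "\<rho> = - fst (snd L) / fst L"
  have r0: "\<rho> \<noteq> 0" using L1 L2 by (simp add: \<rho>_def)
  have rep: "v = a + (hfun v - hfun a) * \<rho>" if "v \<in> Zs L" for v
  proof -
    have "fst L * v + fst (snd L) * hfun v + snd (snd L) = 0"
         "fst L * a + fst (snd L) * hfun a + snd (snd L) = 0" using that a by (auto simp: Zs_def)
    moreover have "fst L * (v - a) + fst (snd L) * (hfun v - hfun a) =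
        (fst L * v + fst (snd L) * hfun v + snd (snd L)) - (fst L * a + fst (snd L) * hfun a + snd (snd L))"
      by (simp add: algebra_simps)
    ultimately have "fst L * (v - a) + fst (snd L) * (hfun v - hfun a) = 0" by simp
    then have "fst L * (v - a) = - fst (snd L) * (hfun v - hfun a)" by (simp add: eq_neg_iff_add_eq_0)
    then show ?thesis using L1 by (simp add: \<rho>_def field_simps)
  qed
  have lam: "cj (hfun v - hfun a) = hfun v - hfun a" for v
  proof -
    have "hfun v - hfun a = (hfun v + c) - (hfun a + c)" by simp
    then show ?thesis using hfun_Tr[of v] hfun_Tr[of a] by (metis cj_diff)
  qed
  have Qv: "Qf v = - 2 * c" if "v \<in> Zs L" for v using that by (simp add: Zs_def Sset_def)
  have key: "v = a \<or> Bf a \<rho> + (hfun v - hfun a) * Qf \<rho> = 0" if "v \<in> Zs L" for v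
  proof -
    have "Qf (a + (hfun v - hfun a) * \<rho>) = Qf a" using rep[OF that] Qv[OF that] Qv[OF a] by simp
    then have "(hfun v - hfun a) * (Bf a \<rho> + (hfun v - hfun a) * Qf \<rho>) = 0"
      using line_param[OF lam] by blast
    then have "hfun v - hfun a = 0 \<or> Bf a \<rho> + (hfun v - hfun a) * Qf \<rho> = 0"
      by (simp only: mult_eq_0_iff)
    then show ?thesis using rep[OF that] by auto
  qed
  have qr: "Qf \<rho> \<noteq> 0" using r0 Qf_ne0 by simp
  show "x = a \<or> x = b"
  proof (rule ccontr)
    assume "\<not> (x = a \<or> x = b)"
    then have xa: "x \<noteq> a" "x \<noteq> b" by auto
    have e1: "Bf a \<rho> + (hfun x - hfun a) * Qf \<rho> = 0" using key[OF x] xa by simp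
    have e2: "Bf a \<rho> + (hfun b - hfun a) * Qf \<rho> = 0" using key[OF b] ab by auto
    have "(hfun x - hfun b) * Qf \<rho> = (Bf a \<rho> + (hfun x - hfun a) * Qf \<rho>) - (Bf a \<rho> + (hfun b - hfun a) * Qf \<rho>)"
      by (simp add: algebra_simps)
    also have "\<dots> = 0" by (simp only: e1 e2) simp
    finally have "hfun x = hfun b" using qr by simp
    then have "x = b" using rep[OF x] rep[OF b] by simp
    then show False using xa by simp
  qed
qed

end

context ffab
begin

lemma line_cases:
  assumes L: "L \<noteq> (0, 0, 0)"
  shows "card (line L \<inter> Pset) \<le> 2 \<or>
         (fst L = 0 \<and> fst (snd L) \<noteq> 0 \<and> card (line L \<inter> Pset) = card (Xt (c - snd (snd L) / fst (snd L))))"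
proof -
  have cz: "card (line L \<inter> Pset) = card (Zs L)" using card_line_Pset[OF L] .
  show ?thesis
  proof (cases "fst (snd L) = 0")
    case True
    show ?thesis
    proof (cases "fst L = 0")
      case True2: True
      then show ?thesis using Zs_A[OF True2 True L] cz by simp
    next
      case False
      then show ?thesis using Zs_B[OF True False] cz by simp
    qed
  next
    case False
    show ?thesis
    proof (cases "fst L = 0")
      case True
      then show ?thesis using Zs_C[OF False True] cz False by simp
    next
      case False2: False
      then show ?thesis using Zs_D[OF False False2] cz by simp
    qed
  qed
qed

lemma arc_case:
  assumes "\<not> (\<exists>y. y^2 = \<alpha>)" "l \<in> lines"
  shows "card (l \<inter> Pset) \<le> 2"
proof -
  obtain L where L: "l = line L" "L \<noteq> (0, 0, 0)" using assms(2) unfolding lines_def by blast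
  show ?thesis using line_cases[OF L(2)] ns_card[OF assms(1)] L(1) by auto
qed

lemma sq_line_vals:
  assumes s: "s^2 = \<alpha>" and l: "l \<in> lines"
  shows "card (l \<inter> Pset) \<in> {0, 1, 2, 4}"
    and "card (l \<inter> Pset) = 4 \<Longrightarrow> pt (1, 0, 0) \<in> l"
proof -
  obtain L where L: "l = line L" "L \<noteq> (0, 0, 0)" using l unfolding lines_def by blast
  have X: "card (Xt t) = 0 \<or> card (Xt t) = 4 \<or> card (Xt t) = 2" for t using sq_card[OF s, of t] by auto
  show "card (l \<inter> Pset) \<in> {0, 1, 2, 4}"
  proof (cases "card (l \<inter> Pset) \<le> 2")
    case True
    then have "card (l \<inter> Pset) = 0 \<or> card (l \<inter> Pset) = 1 \<or> card (l \<inter> Pset) = 2" by linarith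
    then show ?thesis by auto
  next
    case False
    then have "card (l \<inter> Pset) = card (Xt (c - snd (snd L) / fst (snd L)))"
      using line_cases[OF L(2)] L(1) by auto
    then show ?thesis using X[of "c - snd (snd L) / fst (snd L)"] by auto
  qed
  assume c4: "card (l \<inter> Pset) = 4"
  then have "fst L = 0" using line_cases[OF L(2)] L(1) by auto
  then show "pt (1, 0, 0) \<in> l" using L by (simp add: mem_line dot3_def)
qed

lemma Sset_UN: "Sset = (\<Union>t\<in>Fq. Xt t)"
proof
  show "Sset \<subseteq> (\<Union>t\<in>Fq. Xt t)"
  proof
    fix x assume x: "x \<in> Sset"
    define t where "t = \<alpha> * x^2 + cj (\<alpha> * x^2)"
    have "t \<in> Fq" by (simp add: Fq_iff t_def add.commute)
    moreover have "x \<in> Xt t" using x by (simp add: Xt_def t_def)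
    ultimately show "x \<in> (\<Union>t\<in>Fq. Xt t)" by blast
  qed
  show "(\<Union>t\<in>Fq. Xt t) \<subseteq> Sset" by (auto simp: Xt_def)
qed

lemma card_Sset_sum: "card Sset = (\<Sum>t\<in>Fq. card (Xt t))"
  unfolding Sset_UN by (rule card_UN_disjoint) (auto simp: Xt_def)

definition T4 :: "'a set" where "T4 = {t \<in> Fq. card (Xt t) = 4}"
definition T2 :: "'a set" where "T2 = {t \<in> Fq. card (Xt t) = 2}"

lemma card_T2:
  assumes s: "s^2 = \<alpha>"
  shows "card T2 \<le> 2"
proof -
  have sub: "T2 \<subseteq> {t. Dd * t^2 = 16 * c^2 * Nf \<alpha>}"
  proof
    fix t assume "t \<in> T2"
    then have c2: "card (Xt t) = 2" by (simp add: T2_def)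
    from sq_card[OF s, of t] c2 show "t \<in> {t. Dd * t^2 = 16 * c^2 * Nf \<alpha>}" by auto
  qed
  show ?thesis
  proof (cases "T2 = {}")
    case True then show ?thesis by simp
  next
    case False
    then obtain t0 where t0: "t0 \<in> T2" by blast
    have "T2 \<subseteq> {t0, - t0}"
    proof
      fix t assume t: "t \<in> T2"
      have "Dd * t^2 = 16 * c^2 * Nf \<alpha>" "Dd * t0^2 = 16 * c^2 * Nf \<alpha>" using sub t t0 by auto
      then have "Dd * t^2 = Dd * t0^2" by simp
      then have "t^2 = t0^2" using mult_left_cancel[OF Dd_ne0] by blast
      then have "(t - t0) * (t + t0) = 0" by (simp add: power2_eq_square algebra_simps)
      then show "t \<in> {t0, - t0}" by (auto simp: eq_neg_iff_add_eq_0)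
    qed
    then have "card T2 \<le> card {t0, - t0}" by (intro card_mono) auto
    also have "\<dots> \<le> 2" by (simp add: card_insert_if)
    finally show ?thesis .
  qed
qed

lemma count_T4:
  assumes s: "s^2 = \<alpha>"
  shows "q + 1 \<le> 4 * card T4 + 4"
proof -
  have le: "card (Xt t) \<le> 4 * (if t \<in> T4 then 1 else 0) + 2 * (if t \<in> T2 then 1 else 0)" if "t \<in> Fq" for t
    using sq_card[OF s, of t] that by (auto simp: T4_def T2_def)
  have "q + 1 = (\<Sum>t\<in>Fq. card (Xt t))" using card_Sset card_Sset_sum by simp
  also have "\<dots> \<le> (\<Sum>t\<in>Fq. 4 * (if t \<in> T4 then 1 else 0) + 2 * (if t \<in> T2 then 1 else 0))"
    using le by (intro sum_mono) auto
  also have "\<dots> = 4 * (\<Sum>t\<in>Fq. (if t \<in> T4 then 1 else 0)) + 2 * (\<Sum>t\<in>Fq. (if t \<in> T2 then 1 else 0))"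
    by (simp add: sum.distrib sum_distrib_left)
  also have "(\<Sum>t\<in>Fq. (if t \<in> T4 then 1 else 0)) = card T4"
  proof -
    have "card T4 = (\<Sum>t\<in>{t \<in> Fq. t \<in> T4}. 1)" by (simp add: T4_def)
    also have "\<dots> = (\<Sum>t\<in>Fq. (if t \<in> T4 then 1 else 0))" by (rule sum.inter_filter) simp
    finally show ?thesis by simp
  qed
  also have "(\<Sum>t\<in>Fq. (if t \<in> T2 then 1 else 0)) = card T2"
  proof -
    have "card T2 = (\<Sum>t\<in>{t \<in> Fq. t \<in> T2}. 1)" by (simp add: T2_def)
    also have "\<dots> = (\<Sum>t\<in>Fq. (if t \<in> T2 then 1 else 0))" by (rule sum.inter_filter) simp
    finally show ?thesis by simp
  qed
  finally show ?thesis using card_T2[OF s] by simp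
qed

definition hline :: "'a \<Rightarrow> 'a vec3 set set" where "hline t = line (0, 1, c - t)"

lemma hline_card: "card (hline t \<inter> Pset) = card (Xt t)"
proof -
  have "(0::'a, 1::'a, c - t) \<noteq> (0, 0, 0)" by simp
  then have "card (hline t \<inter> Pset) = card (Zs (0, 1, c - t))" unfolding hline_def by (rule card_line_Pset)
  also have "Zs (0, 1, c - t) = Xt t" using Zs_C[of "(0, 1, c - t)"] by simp
  finally show ?thesis .
qed

lemma hline_lines: "hline t \<in> lines"
proof -
  have "(0::'a, 1::'a, c - t) \<noteq> (0, 0, 0)" by simp
  then show ?thesis unfolding hline_def lines_def by blast
qed

lemma hline_inj: "inj hline"
proof (rule injI)
  fix t t' assume e: "hline t = hline t'"
  have "pt (0, t - c, 1) \<in> hline t" unfolding hline_def by (simp add: mem_line dot3_def)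
  then have "pt (0, t - c, 1) \<in> hline t'" using e by simp
  then show "t = t'" unfolding hline_def by (simp add: mem_line dot3_def)
qed

lemma N4_ge:
  "card T4 \<le> card {l \<in> lines. card (l \<inter> Pset) = 4}"
proof (rule card_inj_on_le)
  show "inj_on hline T4" using hline_inj by (simp add: inj_on_def inj_def)
  show "hline ` T4 \<subseteq> {l \<in> lines. card (l \<inter> Pset) = 4}"
    using hline_lines hline_card by (auto simp: T4_def)
  show "finite {l \<in> lines. card (l \<inter> Pset) = (4::nat)}" by simp
qed

end

context ffab
begin

lemma q3_vacuous:
  assumes q3: "q = 3" and s: "s^2 = \<alpha>"
  shows False
proof -
  have M8: "M = 8" unfolding M_def using q3 by simp
  have z4: "\<zeta> ^ 4 = -1" using zeta_half M8 by simp
  have Fq3: "x = 0 \<or> x = 1 \<or> x = -1" if "x \<in> Fq" for x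
  proof (cases "x = 0")
    case False
    then have "x \<in> (\<lambda>j. \<zeta> ^ ((q + 1) * j)) ` {..<q - 1}" using Fq_star that by blast
    then obtain j where j: "j < 2" "x = \<zeta> ^ (4 * j)" using q3 by auto
    then have "j = 0 \<or> j = 1" by auto
    then show ?thesis
    proof
      assume "j = 0" then show ?thesis using j by simp
    next
      assume "j = 1" then have "x = \<zeta> ^ 4" using j by simp
      then show ?thesis using z4 by simp
    qed
  qed simp
  have two: "(2::'a) \<in> Fq" by (simp add: Fq_iff)
  have two1: "(2::'a) \<noteq> 1"
  proof
    assume "(2::'a) = 1"
    then have "(2::'a) - 1 = 1 - 1" by simp
    then have "(1::'a) = 0" by simp
    then show False by simp
  qed
  have "(2::'a) = -1" using Fq3[OF two] two_ne0 two1 by blast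
  then have three: "(3::'a) = 0"
  proof -
    assume h: "(2::'a) = -1"
    have "(3::'a) = 2 + 1" by simp
    also have "\<dots> = 0" by (simp only: h) simp
    finally show ?thesis .
  qed
  have DdF: "Dd \<in> Fq" by (simp add: Fq_iff)
  have "Dd \<noteq> 1"
  proof
    assume "Dd = 1"
    then have "\<exists>y. cj y = y \<and> y^2 = Dd" by (intro exI[of _ 1]) simp
    then show False using Dd_nonsq by simp
  qed
  then have Dm: "Dd = -1" using Fq3[OF DdF] Dd_ne0 by auto
  have s0: "s \<noteq> 0" using s a0 by auto
  have "Nf s \<in> Fq" by (simp add: Fq_iff)
  then have Ns: "Nf s = 1 \<or> Nf s = -1" using Fq3[of "Nf s"] Nf_ne0[OF s0] by auto
  have "Nf \<alpha> = Nf s * Nf s" using Nf_mult[of s s] s by (simp only: power2_eq_square)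
  then have Na: "Nf \<alpha> = 1" using Ns by auto
  define d where "d = \<delta> / eps"
  have "cj d = d" by (simp add: d_def cj_eps)
  then have "d \<in> Fq" by (simp add: Fq_iff)
  then have "d = 0 \<or> d = 1 \<or> d = -1" using Fq3[of d] by simp
  then have d2: "d^2 = 0 \<or> d^2 = 1" by auto
  have h2: "(q + 1) div 2 = 2" using q3 by simp
  have "eps = \<zeta> ^ 2" unfolding eps_def h2 ..
  then have "eps^2 = \<zeta> ^ (2 * 2)" by (simp only: power_mult)
  then have e2: "eps^2 = -1" using z4 by simp
  have "\<delta> = d * eps" using eps_ne0 by (simp add: d_def)
  then have "\<delta>^2 = d^2 * eps^2" by (simp only: power_mult_distrib)
  then have "\<delta>^2 = - (d^2)" using e2 by simp
  then have "Dd = 4 - d^2" using Na by (simp add: Dd_def)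
  also have "(4::'a) = 1 + 3" by simp
  finally have "Dd = 1 + 3 - d^2" .
  then have "Dd = 1 - d^2" using three by simp
  then have "d^2 = 2" using Dm by (simp add: algebra_simps)
  then show False using d2 two_ne0 two1 by auto
qed

lemma img_helper: "l \<in> lines \<Longrightarrow> card (l \<inter> Pset) = k \<Longrightarrow> k \<in> (\<lambda>l. card (l \<inter> Pset)) ` lines"
  by (rule rev_image_eqI[of l]) simp_all

lemma sq_exists:
  assumes s: "s^2 = \<alpha>"
  shows "0 \<in> (\<lambda>l. card (l \<inter> Pset)) ` lines"
    and "1 \<in> (\<lambda>l. card (l \<inter> Pset)) ` lines"
    and "2 \<in> (\<lambda>l. card (l \<inter> Pset)) ` lines"
    and "4 \<in> (\<lambda>l. card (l \<inter> Pset)) ` lines"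
proof -
  have q5: "q \<ge> 5"
  proof -
    have "q \<noteq> 3" using q3_vacuous s by blast
    then show ?thesis using q_ge3 oddq by presburger
  qed
  have cS: "card Sset = q + 1" by (rule card_Sset)
  then have "Sset \<noteq> {}" by auto
  then obtain x1 where x1: "x1 \<in> Sset" by blast
  show "0 \<in> (\<lambda>l. card (l \<inter> Pset)) ` lines"
  proof -
    have L: "(0::'a, 0::'a, 1::'a) \<noteq> (0, 0, 0)" by simp
    have "line (0::'a, 0::'a, 1::'a) \<in> lines" using L unfolding lines_def by blast
    moreover have "card (line (0::'a, 0, 1) \<inter> Pset) = 0"
      using card_line_Pset[OF L] Zs_A[of "(0, 0, 1)"] by simp
    ultimately show ?thesis by (rule img_helper)
  qed
  show "1 \<in> (\<lambda>l. card (l \<inter> Pset)) ` lines"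
  proof -
    have L: "(1::'a, 0::'a, - x1) \<noteq> (0, 0, 0)" by simp
    have "line (1::'a, 0::'a, - x1) \<in> lines" using L unfolding lines_def by blast
    moreover have "card (line (1, 0, - x1) \<inter> Pset) = 1"
    proof -
      have "card (Zs (1, 0, - x1)) \<le> 1" using Zs_B[of "(1, 0, - x1)"] by simp
      moreover have "x1 \<in> Zs (1, 0, - x1)" using x1 by (simp add: Zs_def)
      moreover have "card (Zs (1, 0, - x1)) > 0"
        using \<open>x1 \<in> Zs (1, 0, - x1)\<close> by (auto simp: card_gt_0_iff)
      ultimately have "card (Zs (1, 0, - x1)) = 1" by simp
      then show ?thesis using card_line_Pset[OF L] by simp
    qed
    ultimately show ?thesis by (rule img_helper)
  qed
  show "2 \<in> (\<lambda>l. card (l \<inter> Pset)) ` lines"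
  proof -
    define t1 where "t1 = hfun x1 + c"
    have "card (Xt t1) \<le> 4" using sq_card[OF s, of t1] by auto
    then have "\<not> Sset \<subseteq> Xt t1"
    proof -
      assume c4: "card (Xt t1) \<le> 4"
      show ?thesis
      proof
        assume "Sset \<subseteq> Xt t1"
        then have "card Sset \<le> card (Xt t1)" by (intro card_mono) auto
        then show False using c4 cS q5 by simp
      qed
    qed
    then obtain x2 where x2: "x2 \<in> Sset" "x2 \<notin> Xt t1" by blast
    have hne: "hfun x2 \<noteq> hfun x1"
    proof
      assume "hfun x2 = hfun x1"
      then have "\<alpha> * x2^2 + cj (\<alpha> * x2^2) = t1" by (simp add: t1_def hfun_def)
      then show False using x2 by (simp add: Xt_def)
    qed
    then have xne: "x1 \<noteq> x2" by auto
    define L where "L = (hfun x1 - hfun x2, x2 - x1, x1 * hfun x2 - x2 * hfun x1)"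
    have L0: "L \<noteq> (0, 0, 0)" using hne by (simp add: L_def)
    have "line L \<in> lines" using L0 unfolding lines_def by blast
    moreover have "card (line L \<inter> Pset) = 2"
    proof -
      have "card (Zs L) \<le> 2" using Zs_D[of L] hne xne by (simp add: L_def)
      moreover have "x1 \<in> Zs L" "x2 \<in> Zs L" using x1 x2(1) by (simp_all add: Zs_def L_def algebra_simps)
      then have "card {x1, x2} \<le> card (Zs L)" by (intro card_mono) auto
      then have "2 \<le> card (Zs L)" using xne by simp
      ultimately show ?thesis using card_line_Pset[OF L0] by simp
    qed
    ultimately show ?thesis by (rule img_helper)
  qed
  show "4 \<in> (\<lambda>l. card (l \<inter> Pset)) ` lines"
  proof -
    have "q + 1 \<le> 4 * card T4 + 4" using count_T4[OF s] .
    then have "card T4 \<noteq> 0" using q5 by auto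
    then have "T4 \<noteq> {}" by auto
    then obtain t where t: "t \<in> T4" by blast
    then have "card (hline t \<inter> Pset) = 4" using hline_card by (simp add: T4_def)
    then show ?thesis by (rule img_helper[OF hline_lines])
  qed
qed

lemma main_sq:
  assumes s: "s^2 = \<alpha>"
  shows "of_class Pset {0, 1, 2, 4}"
    and "real (card {l \<in> lines. card (l \<inter> Pset) = 4}) \<ge> (real q - 3) / 4"
    and "\<forall>l \<in> lines. card (l \<inter> Pset) = 4 \<longrightarrow> pt (1, 0, 0) \<in> l"
proof -
  show "of_class Pset {0, 1, 2, 4}"
    unfolding of_class_def
  proof
    show "(\<lambda>l. card (l \<inter> Pset)) ` lines \<subseteq> {0, 1, 2, 4}"
      by (intro image_subsetI) (rule sq_line_vals(1)[OF s])
    show "{0, 1, 2, 4} \<subseteq> (\<lambda>l. card (l \<inter> Pset)) ` lines" using sq_exists[OF s] by blast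
  qed
  have "q + 1 \<le> 4 * card T4 + 4" using count_T4[OF s] .
  moreover have "card T4 \<le> card {l \<in> lines. card (l \<inter> Pset) = 4}" by (rule N4_ge)
  ultimately have "real q + 1 \<le> 4 * real (card {l \<in> lines. card (l \<inter> Pset) = 4}) + 4" by linarith
  then have "real q - 3 \<le> real (card {l \<in> lines. card (l \<inter> Pset) = 4}) * 4" by linarith
  then show "real (card {l \<in> lines. card (l \<inter> Pset) = 4}) \<ge> (real q - 3) / 4"
    by (simp add: pos_divide_le_eq)
  show "\<forall>l \<in> lines. card (l \<inter> Pset) = 4 \<longrightarrow> pt (1, 0, 0) \<in> l" using sq_line_vals(2)[OF s] by blast
qed

end

theorem lemma2p7:
  fixes q :: nat and \<zeta> \<alpha> \<beta> :: "'a::{field,finite}"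
  assumes card: "card (UNIV :: 'a set) = q ^ 2"
    and odd: "odd q"
    and prim: "primitive_elem \<zeta>"
    and a0: "\<alpha> \<noteq> 0"
    and nsq: "\<not> (\<exists>y \<in> subfield_q q. y ^ 2 = (\<beta> ^ q - \<beta>) ^ 2 + 4 * \<alpha> ^ (q + 1))"
  shows "let \<epsilon> = \<zeta> ^ ((q + 1) div 2); w = \<epsilon> ^ 2;
             R2 = pt (0, w * \<epsilon>, 1); Uinf = pt (1, 0, 0);
             P = pedal (unital_ab q \<alpha> \<beta>) R2
         in ((\<not> (\<exists>y. y ^ 2 = \<alpha>)) \<longrightarrow> is_arc P)
          \<and> ((\<exists>y. y ^ 2 = \<alpha>) \<longrightarrow>
               of_class P {0, 1, 2, 4}
             \<and> real (card {l \<in> lines. card (l \<inter> P) = 4}) \<ge> (real q - 3) / 4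
             \<and> (\<forall>l \<in> lines. card (l \<inter> P) = 4 \<longrightarrow> Uinf \<in> l))"
proof -
  interpret ffab q \<zeta> \<alpha> \<beta>
    by unfold_locales (use card odd prim a0 nsq in auto)
  have P: "pedal (unital_ab q \<alpha> \<beta>) (pt (0, (\<zeta> ^ ((q + 1) div 2))^2 * \<zeta> ^ ((q + 1) div 2), 1)) = Pset"
    using pedal_eq by (simp add: c_def eps_def)
  show ?thesis
    unfolding Let_def P
  proof (intro conjI impI)
    assume "\<not> (\<exists>y. y ^ 2 = \<alpha>)"
    then show "is_arc Pset" unfolding is_arc_def using arc_case by blast
  next
    assume "\<exists>y. y ^ 2 = \<alpha>"
    then obtain s where s: "s^2 = \<alpha>" by blast
    show "of_class Pset {0, 1, 2, 4}" using main_sq(1)[OF s] .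
    show "real (card {l \<in> lines. card (l \<inter> Pset) = 4}) \<ge> (real q - 3) / 4" using main_sq(2)[OF s] .
    show "\<forall>l \<in> lines. card (l \<inter> Pset) = 4 \<longrightarrow> pt (1, 0, 0) \<in> l" using main_sq(3)[OF s] .
  qed
qed


end
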